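(* For all integers $s\ge1$, $r\ge0$ the length-one bi-bracket $\left[\begin{matrix}s\\ r\end{matrix}\right]$ lies in $\mathcal{MD}$; more precisely, for all $k,d\ge0$, every bi-bracket $\left[\begin{matrix}s\\ r\end{matrix}\right]$ with $s\le k$, $r\le d$ (and $1\le d$, $1\le k$) lies in $\operatorname{Fil}^{W,L}_{k+d,\,d+1}(\mathcal{MD})$, i.e. in the $\mathbb{Q}$-span of $1$ and the brackets $[t_1,\dots,t_m]$ with $m\le d+1$, $m\le k+d$ and $t_1+\dots+t_m\le k+d$.
   Context: Bi-brackets: for integers $s_1,\dots,s_l\ge1$, $r_1,\dots,r_l\ge0$, \[ \left[\begin{matrix}s_1,\dots,s_l\\ r_1,\dots,r_l\end{matrix}\right]:=\sum_{\substack{u_1>\dots>u_l>0\\ v_1,\dots,v_l>0}}\prod_{j=1}^{l}\frac{u_j^{r_j}}{r_j!}\,\frac{v_j^{s_j-1}}{(s_j-1)!}\;q^{u_1v_1+\dots+u_lv_l}\in\mathbb{Q}[[q]]. \] Brackets are the bi-brackets with all $r_j=0$: $[s_1,\dots,s_l]:=\left[\begin{matrix}s_1,\dots,s_l\\ 0,\dots,0\end{matrix}\right]$; its weight is $s_1+\dots+s_l$ and its length $l$. $\mathcal{MD}$ is the $\mathbb{Q}$-vector space spanned by $1$ and all brackets $[s_1,\dots,s_l]$ ($l\ge1$, $s_j\ge1$). *)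

theory Defs
  imports Complex_Main "HOL-Computational_Algebra.Formal_Power_Series"
begin

definition bb_index :: "nat \<Rightarrow> nat \<Rightarrow> (nat list \<times> nat list) set" where
  "bb_index l n = {(us, vs). length us = l \<and> length vs = l \<and>
      sorted_wrt (>) us \<and> (\<forall>u\<in>set us. 0 < u) \<and> (\<forall>v\<in>set vs. 0 < v) \<and>
      (\<Sum>j<l. us ! j * vs ! j) = n}"

text \<open>Bi-bracket [s_1..s_l ; r_1..r_l] as a formal power series in Q[[q]]
  (the lists ss and rs are meant to have equal length).\<close>
definition bibracket :: "nat list \<Rightarrow> nat list \<Rightarrow> rat fps" where
  "bibracket ss rs = Abs_fps (\<lambda>n. \<Sum>(us, vs)\<in>bb_index (length ss) n.
      \<Prod>j<length ss. (of_nat (us ! j) ^ (rs ! j) / fact (rs ! j)) *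
                       (of_nat (vs ! j) ^ (ss ! j - 1) / fact (ss ! j - 1)))"

definition bracket :: "nat list \<Rightarrow> rat fps" where
  "bracket ss = bibracket ss (replicate (length ss) 0)"

definition span_one_brackets :: "nat list set \<Rightarrow> rat fps set" where
  "span_one_brackets S = {f. \<exists>c0 (c :: nat list \<Rightarrow> rat) F. finite F \<and> F \<subseteq> S \<and>
      f = fps_const c0 + (\<Sum>ts\<in>F. fps_const (c ts) * bracket ts)}"

definition MD :: "rat fps set" where
  "MD = span_one_brackets {ts. ts \<noteq> [] \<and> (\<forall>t\<in>set ts. 1 \<le> t)}"

definition Fil_WL :: "nat \<Rightarrow> nat \<Rightarrow> rat fps set" where
  "Fil_WL w l = span_one_brackets
     {ts. ts \<noteq> [] \<and> (\<forall>t\<in>set ts. 1 \<le> t) \<and> length ts \<le> l \<and> sum_list ts \<le> w}"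

end

theory Submission
  imports Defs "HOL-Computational_Algebra.Polynomial"
begin

lemma span_const: "fps_const c \<in> span_one_brackets S"
  unfolding span_one_brackets_def by (rule CollectI, rule exI[of _ c], rule exI[of _ "\<lambda>_. 0"], rule exI[of _ "{}"]) simp

lemma span_zero: "0 \<in> span_one_brackets S"
  using span_const[of 0 S] by simp

lemma span_one: "1 \<in> span_one_brackets S"
  using span_const[of 1 S] by simp

lemma span_bracket: "ts \<in> S \<Longrightarrow> bracket ts \<in> span_one_brackets S"
  unfolding span_one_brackets_def
  by (rule CollectI, rule exI[of _ 0], rule exI[of _ "\<lambda>_. 1"], rule exI[of _ "{ts}"]) simp

lemma span_add:
  assumes "f \<in> span_one_brackets S" "g \<in> span_one_brackets S"
  shows "f + g \<in> span_one_brackets S"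
proof -
  from assms(1) obtain c0 c F where F: "finite F" "F \<subseteq> S"
    "f = fps_const c0 + (\<Sum>ts\<in>F. fps_const (c ts) * bracket ts)"
    unfolding span_one_brackets_def by blast
  from assms(2) obtain d0 d G where G: "finite G" "G \<subseteq> S"
    "g = fps_const d0 + (\<Sum>ts\<in>G. fps_const (d ts) * bracket ts)"
    unfolding span_one_brackets_def by blast
  define e where "e ts = (if ts \<in> F then c ts else 0) + (if ts \<in> G then d ts else 0)" for ts
  have 1: "(\<Sum>ts\<in>F. fps_const (c ts) * bracket ts) = (\<Sum>ts\<in>F \<union> G. fps_const (if ts \<in> F then c ts else 0) * bracket ts)"
  proof -
    have "(\<Sum>ts\<in>F \<union> G. fps_const (if ts \<in> F then c ts else 0) * bracket ts) = (\<Sum>ts\<in>F \<union> G. if ts \<in> F then fps_const (c ts) * bracket ts else 0)"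
      by (rule sum.cong) auto
    also have "\<dots> = (\<Sum>ts\<in>(F \<union> G) \<inter> F. fps_const (c ts) * bracket ts)"
      by (rule sum.inter_restrict[symmetric]) (simp add: F(1) G(1))
    also have "(F \<union> G) \<inter> F = F" by blast
    finally show ?thesis by simp
  qed
  have 2: "(\<Sum>ts\<in>G. fps_const (d ts) * bracket ts) = (\<Sum>ts\<in>F \<union> G. fps_const (if ts \<in> G then d ts else 0) * bracket ts)"
  proof -
    have "(\<Sum>ts\<in>F \<union> G. fps_const (if ts \<in> G then d ts else 0) * bracket ts) = (\<Sum>ts\<in>F \<union> G. if ts \<in> G then fps_const (d ts) * bracket ts else 0)"
      by (rule sum.cong) auto
    also have "\<dots> = (\<Sum>ts\<in>(F \<union> G) \<inter> G. fps_const (d ts) * bracket ts)"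
      by (rule sum.inter_restrict[symmetric]) (simp add: F(1) G(1))
    also have "(F \<union> G) \<inter> G = G" by blast
    finally show ?thesis by simp
  qed
  have 3: "fps_const (e ts) * bracket ts = fps_const (if ts \<in> F then c ts else 0) * bracket ts + fps_const (if ts \<in> G then d ts else 0) * bracket ts" for ts
    unfolding e_def by (simp only: fps_const_add[symmetric] distrib_right)
  have "(\<Sum>ts\<in>F \<union> G. fps_const (e ts) * bracket ts) = (\<Sum>ts\<in>F. fps_const (c ts) * bracket ts) + (\<Sum>ts\<in>G. fps_const (d ts) * bracket ts)"
    unfolding 1 2 3 by (rule sum.distrib)
  then have "f + g = fps_const (c0 + d0) + (\<Sum>ts\<in>F \<union> G. fps_const (e ts) * bracket ts)"
    unfolding F(3) G(3) by (simp add: algebra_simps)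
  moreover have "finite (F \<union> G)" "F \<union> G \<subseteq> S" using F G by auto
  ultimately show ?thesis unfolding span_one_brackets_def by (intro CollectI exI conjI)
qed

lemma span_smult:
  assumes "f \<in> span_one_brackets S"
  shows "fps_const a * f \<in> span_one_brackets S"
proof -
  from assms obtain c0 c F where F: "finite F" "F \<subseteq> S"
    "f = fps_const c0 + (\<Sum>ts\<in>F. fps_const (c ts) * bracket ts)"
    unfolding span_one_brackets_def by blast
  have "fps_const a * f = fps_const (a * c0) + (\<Sum>ts\<in>F. fps_const (a * c ts) * bracket ts)"
    unfolding F(3) by (simp add: sum_distrib_left algebra_simps)
  then show ?thesis unfolding span_one_brackets_def using F by (intro CollectI exI conjI)
qed

lemma span_uminus: "f \<in> span_one_brackets S \<Longrightarrow> - f \<in> span_one_brackets S"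
proof -
  assume "f \<in> span_one_brackets S"
  from span_smult[OF this, of "-1"] show ?thesis by (metis fps_const_neg fps_const_1_eq_1 mult_minus1)
qed

lemma span_diff: "f \<in> span_one_brackets S \<Longrightarrow> g \<in> span_one_brackets S \<Longrightarrow> f - g \<in> span_one_brackets S"
  using span_add[of f S "-g"] span_uminus[of g S] by simp

lemma span_sum: "(\<And>x. x \<in> A \<Longrightarrow> f x \<in> span_one_brackets S) \<Longrightarrow> sum f A \<in> span_one_brackets S"
  by (induction A rule: infinite_finite_induct) (auto intro: span_add span_zero)

lemma span_sum_list: "(\<And>x. x \<in> set xs \<Longrightarrow> f x \<in> span_one_brackets S) \<Longrightarrow> sum_list (map f xs) \<in> span_one_brackets S"
  by (induction xs) (auto intro: span_add span_zero)

lemma span_mono: "S \<subseteq> T \<Longrightarrow> span_one_brackets S \<subseteq> span_one_brackets T"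
  unfolding span_one_brackets_def by blast

definition Fil :: "nat \<Rightarrow> nat \<Rightarrow> rat fps set" where
  "Fil w l = span_one_brackets {ts. ts \<noteq> [] \<and> (\<forall>t\<in>set ts. 1 \<le> t) \<and> length ts \<le> l \<and> sum_list ts \<le> w}"

lemma Fil_mono: "w \<le> w' \<Longrightarrow> l \<le> l' \<Longrightarrow> Fil w l \<subseteq> Fil w' l'"
  unfolding Fil_def by (rule span_mono) auto

lemma Fil_mono': "f \<in> Fil w l \<Longrightarrow> w \<le> w' \<Longrightarrow> l \<le> l' \<Longrightarrow> f \<in> Fil w' l'"
  using Fil_mono by blast

lemma bb_index_bound:
  assumes "(us, vs) \<in> bb_index l n"
  shows "set us \<subseteq> {..n}" "set vs \<subseteq> {..n}"
proof -
  have len: "length us = l" "length vs = l" and pos: "\<forall>u\<in>set us. 0 < u" "\<forall>v\<in>set vs. 0 < v"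
    and s: "(\<Sum>j<l. us ! j * vs ! j) = n" using assms unfolding bb_index_def by auto
  have le: "us ! j * vs ! j \<le> n" if "j < l" for j
    using s member_le_sum[of j "{..<l}" "\<lambda>j. us ! j * vs ! j"] that by auto
  show "set us \<subseteq> {..n}"
  proof
    fix x assume "x \<in> set us"
    then obtain j where j: "j < l" "us ! j = x" using len by (auto simp: in_set_conv_nth)
    have "vs ! j > 0" using pos j len by auto
    then have "x \<le> us ! j * vs ! j" using j by simp
    then show "x \<in> {..n}" using le[OF j(1)] by simp
  qed
  show "set vs \<subseteq> {..n}"
  proof
    fix x assume "x \<in> set vs"
    then obtain j where j: "j < l" "vs ! j = x" using len by (auto simp: in_set_conv_nth)
    have "us ! j > 0" using pos j len by auto
    then have "x \<le> us ! j * vs ! j" using j by simp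
    then show "x \<in> {..n}" using le[OF j(1)] by simp
  qed
qed

lemma finite_bb_index: "finite (bb_index l n)"
proof -
  have "bb_index l n \<subseteq> {xs. set xs \<subseteq> {..n} \<and> length xs = l} \<times> {xs. set xs \<subseteq> {..n} \<and> length xs = l}"
  proof
    fix x assume x: "x \<in> bb_index l n"
    obtain us vs where x': "x = (us, vs)" by (cases x)
    show "x \<in> {xs. set xs \<subseteq> {..n} \<and> length xs = l} \<times> {xs. set xs \<subseteq> {..n} \<and> length xs = l}"
      using bb_index_bound[of us vs l n] x unfolding x' by (auto simp: bb_index_def)
  qed
  moreover have "finite ({xs. set xs \<subseteq> {..n} \<and> length xs = l} \<times> {xs. set xs \<subseteq> {..n} \<and> length xs = l})"
    by (intro finite_cartesian_product finite_lists_length_eq) auto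
  ultimately show ?thesis by (rule finite_subset)
qed

definition Sop :: "nat \<Rightarrow> (nat list \<Rightarrow> nat list \<Rightarrow> rat) \<Rightarrow> rat fps" where
  "Sop m W = Abs_fps (\<lambda>n. \<Sum>(us, vs)\<in>bb_index m n. W us vs)"

lemma Sop_add: "Sop m (\<lambda>us vs. W1 us vs + W2 us vs) = Sop m W1 + Sop m W2"
  unfolding Sop_def by (rule fps_ext) (simp add: sum.distrib case_prod_unfold)

lemma Sop_smult: "Sop m (\<lambda>us vs. c * W us vs) = fps_const c * Sop m W"
  unfolding Sop_def by (rule fps_ext) (simp add: sum_distrib_left case_prod_unfold)

lemma Sop_cong: "(\<And>us vs n. (us, vs) \<in> bb_index m n \<Longrightarrow> W1 us vs = W2 us vs) \<Longrightarrow> Sop m W1 = Sop m W2"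
  unfolding Sop_def by (rule fps_ext) (auto intro!: sum.cong)

lemma Sop_sum: "finite A \<Longrightarrow> Sop m (\<lambda>us vs. \<Sum>a\<in>A. W a us vs) = (\<Sum>a\<in>A. Sop m (W a))"
  unfolding Sop_def fps_eq_iff fps_sum_nth by (simp add: case_prod_unfold) (intro allI sum.swap)

lemma bibracket_Sop: "bibracket ss rs = Sop (length ss) (\<lambda>us vs. \<Prod>j<length ss. (of_nat (us ! j) ^ (rs ! j) / fact (rs ! j)) *
                       (of_nat (vs ! j) ^ (ss ! j - 1) / fact (ss ! j - 1)))"
  unfolding bibracket_def Sop_def by simp

section \<open>Conjugation\<close>

fun psums :: "nat \<Rightarrow> nat list \<Rightarrow> nat list" where
  "psums a [] = []"
| "psums a (v # vs) = (a + v) # psums (a + v) vs"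

fun diffs :: "nat list \<Rightarrow> nat list" where
  "diffs [] = []"
| "diffs [u] = [u]"
| "diffs (u # w # us) = (u - w) # diffs (w # us)"

definition dot :: "nat list \<Rightarrow> nat list \<Rightarrow> nat" where
  "dot xs ys = sum_list (map (\<lambda>(x, y). x * y) (zip xs ys))"

lemma dot_Nil[simp]: "dot [] ys = 0" "dot xs [] = 0" by (simp_all add: dot_def)
lemma dot_Cons[simp]: "dot (x # xs) (y # ys) = x * y + dot xs ys" by (simp add: dot_def)

lemma sum_nth_dot: "length xs = length ys \<Longrightarrow> (\<Sum>j<length xs. xs ! j * ys ! j) = dot xs ys"
proof (induction xs arbitrary: ys)
  case Nil then show ?case by simp
next
  case (Cons x xs)
  then obtain y ys' where ys: "ys = y # ys'" by (cases ys) auto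
  have "(\<Sum>j<length (x # xs). (x # xs) ! j * ys ! j) = x * y + (\<Sum>j<length xs. xs ! j * ys' ! j)"
    unfolding ys by (simp add: sum.lessThan_Suc_shift del: sum.lessThan_Suc)
  then show ?case using Cons ys by simp
qed

lemma dot_rev: "length xs = length ys \<Longrightarrow> dot (rev xs) (rev ys) = dot xs ys"
  by (simp add: dot_def zip_rev rev_map[symmetric] sum_list_rev)

lemma length_psums[simp]: "length (psums a vs) = length vs"
  by (induction a vs rule: psums.induct) auto

lemma length_diffs[simp]: "length (diffs us) = length us"
  by (induction us rule: diffs.induct) auto

lemma psums_snoc: "psums a (xs @ [y]) = psums a xs @ [a + sum_list xs + y]"
  by (induction a xs rule: psums.induct) (auto simp: add.assoc)

lemma abel:
  assumes "sorted_wrt (>) us" "length us = length vs"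
  shows "dot (psums a vs) (diffs us) = a * (case us of [] \<Rightarrow> 0 | u # _ \<Rightarrow> u) + dot us vs"
  using assms
proof (induction us arbitrary: a vs rule: diffs.induct)
  case 1 then show ?case by simp
next
  case (2 u) then show ?case by (cases vs) (auto simp: algebra_simps)
next
  case (3 u w us)
  then obtain v vs' where vs: "vs = v # vs'" by (cases vs) auto
  have wu: "w < u" using 3(2) by simp
  have IH: "dot (psums (a + v) vs') (diffs (w # us)) = (a + v) * w + dot (w # us) vs'"
    using 3 vs by (auto simp: )
  have "dot (psums a vs) (diffs (u # w # us)) = (a + v) * (u - w) + ((a + v) * w + dot (w # us) vs')"
    using IH vs by simp
  also have "\<dots> = (a + v) * ((u - w) + w) + dot (w # us) vs'"
    by (simp only: add_mult_distrib2 add.assoc)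
  also have "(u - w) + w = u" using wu by simp
  finally show ?case using vs by (simp add: algebra_simps)
qed

lemma sum_diffs: "sorted_wrt (>) (u # us) \<Longrightarrow> sum_list (diffs (u # us)) = u"
  by (induction "u # us" arbitrary: u us rule: diffs.induct) auto

lemma psums_rev_diffs: "sorted_wrt (>) us \<Longrightarrow> psums 0 (rev (diffs us)) = rev us"
proof (induction us rule: diffs.induct)
  case 1 then show ?case by simp
next
  case (2 u) then show ?case by simp
next
  case (3 u w us)
  have s: "sum_list (rev (diffs (w # us))) = w" using sum_diffs[of w us] 3(2) by simp
  have "psums 0 (rev (diffs (u # w # us))) = psums 0 (rev (diffs (w # us)) @ [u - w])" by simp
  also have "\<dots> = rev (w # us) @ [w + (u - w)]" unfolding psums_snoc s using 3 by simp
  also have "w + (u - w) = u" using 3(2) by simp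
  finally show ?case by simp
qed

lemma rev_psums_snoc: "rev (psums 0 (vs @ [v])) = (sum_list vs + v) # rev (psums 0 vs)"
  by (simp add: psums_snoc)

lemma diffs_rev_psums: "diffs (rev (psums 0 vs)) = rev vs"
proof (induction vs rule: rev_induct)
  case Nil then show ?case by simp
next
  case (snoc v vs)
  show ?case
  proof (cases vs rule: rev_exhaust)
    case Nil then show ?thesis by simp
  next
    case (snoc vs' v')
    have "rev (psums 0 (vs @ [v])) = (sum_list vs + v) # sum_list vs # rev (psums 0 vs')"
      unfolding rev_psums_snoc snoc by simp
    moreover have "rev (psums 0 vs) = sum_list vs # rev (psums 0 vs')"
      unfolding snoc rev_psums_snoc by simp
    ultimately have "diffs (rev (psums 0 (vs @ [v]))) = v # diffs (rev (psums 0 vs))"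
      by simp
    then show ?thesis using snoc.IH by simp
  qed
qed

lemma psums_sorted: "(\<forall>v\<in>set vs. 0 < v) \<Longrightarrow> sorted_wrt (<) (psums a vs) \<and> (\<forall>x\<in>set (psums a vs). a < x)"
  by (induction a vs rule: psums.induct) fastforce+

lemma diffs_pos: "sorted_wrt (>) us \<Longrightarrow> (\<forall>u\<in>set us. 0 < u) \<Longrightarrow> (\<forall>x\<in>set (diffs us). 0 < x)"
  by (induction us rule: diffs.induct) auto

definition conj :: "nat list \<times> nat list \<Rightarrow> nat list \<times> nat list" where
  "conj x = (rev (psums 0 (snd x)), rev (diffs (fst x)))"

lemma conj_in:
  assumes "x \<in> bb_index m n" shows "conj x \<in> bb_index m n"
proof -
  obtain us vs where x: "x = (us, vs)" by (cases x)
  have A: "length us = m" "length vs = m" "sorted_wrt (>) us" "\<forall>u\<in>set us. 0 < u" "\<forall>v\<in>set vs. 0 < v"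
    "(\<Sum>j<m. us ! j * vs ! j) = n" using assms unfolding x bb_index_def by auto
  have ps: "sorted_wrt (<) (psums 0 vs)" "\<forall>x\<in>set (psums 0 vs). 0 < x" using psums_sorted[OF A(5), of 0] by auto
  have "(\<Sum>j<m. rev (psums 0 vs) ! j * rev (diffs us) ! j) = dot (rev (psums 0 vs)) (rev (diffs us))"
    using sum_nth_dot[of "rev (psums 0 vs)" "rev (diffs us)"] A by simp
  also have "\<dots> = dot (psums 0 vs) (diffs us)" using A by (simp add: dot_rev)
  also have "\<dots> = dot us vs" using abel[of us vs 0] A by simp
  also have "\<dots> = n" using sum_nth_dot[of us vs] A by simp
  finally show ?thesis
    unfolding x conj_def bb_index_def using A ps diffs_pos[OF A(3) A(4)]
    by (auto simp: sorted_wrt_rev)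
qed

lemma conj_conj:
  assumes "x \<in> bb_index m n" shows "conj (conj x) = x"
proof -
  obtain us vs where x: "x = (us, vs)" by (cases x)
  have "sorted_wrt (>) us" using assms unfolding x bb_index_def by auto
  then show ?thesis unfolding x conj_def by (simp add: psums_rev_diffs diffs_rev_psums)
qed

lemma sum_conj: "(\<Sum>x\<in>bb_index m n. f x) = (\<Sum>x\<in>bb_index m n. f (conj x))"
proof -
  have "bij_betw conj (bb_index m n) (bb_index m n)"
    by (rule bij_betw_byWitness[where f'=conj]) (auto intro: conj_in conj_conj)
  then show ?thesis by (rule sum.reindex_bij_betw[symmetric])
qed

lemma Sop_conj: "Sop m W = Sop m (\<lambda>us vs. W (rev (psums 0 vs)) (rev (diffs us)))"
proof -
  have "(\<lambda>n. \<Sum>x\<in>bb_index m n. W (fst x) (snd x)) = (\<lambda>n. \<Sum>x\<in>bb_index m n. W (fst (conj x)) (snd (conj x)))"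
    by (rule ext, rule sum_conj)
  then show ?thesis unfolding Sop_def conj_def by (simp add: case_prod_unfold)
qed

section \<open>Polynomials in the multiplicities\<close>

inductive vpoly :: "nat \<Rightarrow> nat \<Rightarrow> (nat list \<Rightarrow> rat) \<Rightarrow> bool" for m where
  mono: "(\<Sum>j<m. k j) \<le> D \<Longrightarrow> vpoly m D (\<lambda>vs. c * (\<Prod>j<m. of_nat (vs ! j) ^ k j))"
| add: "vpoly m D Wa \<Longrightarrow> vpoly m D Wb \<Longrightarrow> vpoly m D (\<lambda>vs. Wa vs + Wb vs)"

lemma vpoly_monoI: "(\<Sum>j<m. k j) \<le> D \<Longrightarrow> vpoly m D (\<lambda>vs. c * (\<Prod>j<m. of_nat (vs ! j) ^ k j))"
  by (rule vpoly.mono)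

lemma vpoly_add: "vpoly m D Wa \<Longrightarrow> vpoly m D Wb \<Longrightarrow> vpoly m D (\<lambda>vs. Wa vs + Wb vs)"
  by (rule vpoly.add)

lemma vpoly_mono_deg: "vpoly m D W \<Longrightarrow> D \<le> D' \<Longrightarrow> vpoly m D' W"
  by (induction rule: vpoly.induct) (auto intro: vpoly.intros)

lemma vpoly_smult: "vpoly m D W \<Longrightarrow> vpoly m D (\<lambda>vs. a * W vs)"
proof (induction rule: vpoly.induct)
  case (mono k D c)
  then show ?case using vpoly_monoI[where m=m and k=k and D=D and c="a * c"] by (simp add: mult.assoc)
next
  case (add D Wa Wb)
  then show ?case using vpoly_add[where m=m and D=D and Wa="\<lambda>vs. a * Wa vs" and Wb="\<lambda>vs. a * Wb vs"] by (simp add: distrib_left)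
qed

lemma vpoly_const: "vpoly m D (\<lambda>_. c)"
  using vpoly_monoI[where m=m and k="\<lambda>_. 0" and D=D and c=c] by simp

lemma vpoly_coord: "j < m \<Longrightarrow> vpoly m 1 (\<lambda>vs. of_nat (vs ! j))"
proof -
  assume j: "j < m"
  have s: "(\<Sum>i<m. (if i = j then 1 else 0::nat)) = 1" using j by (simp add: sum.delta)
  have p: "(\<Prod>i<m. of_nat (vs ! i) ^ (if i = j then 1 else 0)) = (of_nat (vs ! j) :: rat)" for vs
  proof -
    have "(\<Prod>i<m. (of_nat (vs ! i) :: rat) ^ (if i = j then 1 else 0)) = (\<Prod>i<m. if i = j then of_nat (vs ! i) else 1)"
      by (rule prod.cong) auto
    also have "\<dots> = of_nat (vs ! j)" using j by (simp add: prod.delta)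
    finally show ?thesis .
  qed
  show ?thesis using vpoly_monoI[where m=m and k="\<lambda>i. if i = j then 1 else 0" and D=1 and c=1, unfolded s p] by simp
qed

lemma vpoly_mult_mono:
  assumes "vpoly m Db Wb" "(\<Sum>j<m. k j) \<le> D"
  shows "vpoly m (D + Db) (\<lambda>vs. (c * (\<Prod>j<m. of_nat (vs ! j) ^ k j)) * Wb vs)"
  using assms(1)
proof (induction rule: vpoly.induct)
  case (mono k' D' c')
  have "(\<Sum>j<m. k j + k' j) \<le> D + D'" using mono assms(2) by (simp add: sum.distrib)
  from vpoly_monoI[OF this, where c="c * c'"] show ?case
    by (simp add: power_add prod.distrib algebra_simps)
next
  case (add Db Wa Wb)
  then show ?case using vpoly_add[where m=m and D="D + Db"] by (simp add: distrib_left)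
qed

lemma vpoly_mult: "vpoly m Da Wa \<Longrightarrow> vpoly m Db Wb \<Longrightarrow> vpoly m (Da + Db) (\<lambda>vs. Wa vs * Wb vs)"
proof (induction rule: vpoly.induct)
  case (mono k D c)
  then show ?case using vpoly_mult_mono by blast
next
  case (add D Wa Wa2)
  then show ?case using vpoly_add[where m=m and D="D + Db"] by (simp add: distrib_right)
qed

lemma vpoly_sum: "finite A \<Longrightarrow> (\<And>a. a \<in> A \<Longrightarrow> vpoly m D (W a)) \<Longrightarrow> vpoly m D (\<lambda>vs. \<Sum>a\<in>A. W a vs)"
proof (induction A rule: finite_induct)
  case empty then show ?case using vpoly_const[where m=m and D=D and c=0] by simp
next
  case (insert x F)
  then show ?case using vpoly_add[where m=m and D=D and Wa="W x" and Wb="\<lambda>vs. \<Sum>a\<in>F. W a vs"] by simp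
qed

lemma vpoly_pow: "vpoly m D W \<Longrightarrow> vpoly m (a * D) (\<lambda>vs. W vs ^ a)"
proof (induction a)
  case 0 then show ?case using vpoly_const[where m=m and D=0 and c=1] by simp
next
  case (Suc a)
  then show ?case using vpoly_mult[where m=m and Da=D and Wa=W and Db="a * D" and Wb="\<lambda>vs. W vs ^ a"] by simp
qed

lemma vpoly_prod: "(\<And>i. i < (n::nat) \<Longrightarrow> vpoly m (d i) (W i)) \<Longrightarrow> vpoly m (\<Sum>i<n. d i) (\<lambda>vs. \<Prod>i<n. W i vs)"
proof (induction n)
  case 0 then show ?case using vpoly_const[where m=m and D=0 and c=1] by simp
next
  case (Suc n)
  then show ?case using vpoly_mult[where m=m and Da="\<Sum>i<n. d i" and Wa="\<lambda>vs. \<Prod>i<n. W i vs" and Db="d n" and Wb="W n"]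
    by (simp add: mult.commute add.commute)
qed

lemma bb_index_0: "bb_index 0 n = (if n = 0 then {([], [])} else {})"
  unfolding bb_index_def by auto

lemma Sop_0: "Sop 0 W = fps_const (W [] [])"
  unfolding Sop_def by (rule fps_ext) (simp add: bb_index_0)

lemma bracket_Sop: "bracket ts = Sop (length ts) (\<lambda>us vs. \<Prod>j<length ts. of_nat (vs ! j) ^ (ts ! j - 1) / fact (ts ! j - 1))"
  unfolding bracket_def bibracket_Sop by simp

lemma Sop_mono_Fil:
  assumes "(\<Sum>j<m. k j) \<le> D"
  shows "Sop m (\<lambda>us vs. c * (\<Prod>j<m. of_nat (vs ! j) ^ k j)) \<in> Fil (D + m) m"
proof (cases "m = 0")
  case True
  then show ?thesis unfolding Fil_def by (simp add: Sop_0 span_const)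
next
  case False
  define ts where "ts = map (\<lambda>j. Suc (k j)) [0..<m]"
  have len: "length ts = m" unfolding ts_def by simp
  have tsj: "ts ! j = Suc (k j)" if "j < m" for j unfolding ts_def using that by simp
  have "bracket ts = Sop m (\<lambda>us vs. \<Prod>j<m. of_nat (vs ! j) ^ k j / fact (k j))"
    unfolding bracket_Sop len by (rule Sop_cong) (simp add: tsj)
  have eq: "c * (\<Prod>j<m. (of_nat (vs ! j) :: rat) ^ k j) = (c * (\<Prod>j<m. fact (k j))) * (\<Prod>j<m. of_nat (vs ! j) ^ k j / fact (k j))" for vs
    by (simp add: prod.distrib[symmetric])
  have "Sop m (\<lambda>us vs. c * (\<Prod>j<m. of_nat (vs ! j) ^ k j)) = fps_const (c * (\<Prod>j<m. fact (k j))) * bracket ts"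
    unfolding eq Sop_smult \<open>bracket ts = _\<close> ..
  moreover have "sum_list ts = m + (\<Sum>j<m. k j)"
  proof -
    have "sum_list ts = (\<Sum>i<m. Suc (k i))"
      unfolding ts_def by (simp add: sum_list_sum_nth atLeast0LessThan)
    also have "\<dots> = m + (\<Sum>j<m. k j)" by (induction m) auto
    finally show ?thesis .
  qed
  then have "ts \<in> {ts. ts \<noteq> [] \<and> (\<forall>t\<in>set ts. 1 \<le> t) \<and> length ts \<le> m \<and> sum_list ts \<le> D + m}"
    using False assms len unfolding ts_def by auto
  ultimately show ?thesis unfolding Fil_def by (auto intro: span_smult span_bracket)
qed

lemma Sop_vpoly: "vpoly m D W \<Longrightarrow> Sop m (\<lambda>us vs. W vs) \<in> Fil (D + m) m"
proof (induction rule: vpoly.induct)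
  case (mono k D c) then show ?case by (rule Sop_mono_Fil)
next
  case (add D Wa Wb) then show ?case using Sop_add[of m "\<lambda>us vs. Wa vs" "\<lambda>us vs. Wb vs"] unfolding Fil_def by (simp add: span_add)
qed

lemma psums_nth: "i < length vs \<Longrightarrow> psums a vs ! i = a + (\<Sum>k<Suc i. vs ! k)"
proof (induction a vs arbitrary: i rule: psums.induct)
  case (1 a) then show ?case by simp
next
  case (2 a v vs)
  show ?case
  proof (cases i)
    case 0 then show ?thesis by simp
  next
    case (Suc i')
    then show ?thesis using 2 by (simp add: sum.lessThan_Suc_shift del: sum.lessThan_Suc)
  qed
qed

lemma Sop_umono_Fil:
  "Sop m (\<lambda>us vs. \<Prod>i<m. of_nat (us ! i) ^ a i) \<in> Fil ((\<Sum>i<m. a i) + m) m"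
proof -
  define W where "W vs = (\<Prod>i<m. (\<Sum>k<Suc (m - 1 - i). (of_nat (vs ! k) :: rat)) ^ a i)" for vs
  have "Sop m (\<lambda>us vs. \<Prod>i<m. of_nat (us ! i) ^ a i) = Sop m (\<lambda>us vs. \<Prod>i<m. of_nat (rev (psums 0 vs) ! i) ^ a i)"
    by (rule Sop_conj)
  also have "\<dots> = Sop m (\<lambda>us vs. W vs)"
  proof (rule Sop_cong)
    fix us vs n assume "(us, vs) \<in> bb_index m n"
    then have len: "length vs = m" unfolding bb_index_def by auto
    show "(\<Prod>i<m. of_nat (rev (psums 0 vs) ! i) ^ a i) = W vs"
      unfolding W_def
    proof (rule prod.cong)
      fix i assume "i \<in> {..<m}"
      then have i: "i < m" by simp
      have "rev (psums 0 vs) ! i = psums 0 vs ! (m - 1 - i)" using i len by (simp add: rev_nth)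
      also have "\<dots> = (\<Sum>k<Suc (m - 1 - i). vs ! k)" using i len by (simp add: psums_nth)
      finally show "of_nat (rev (psums 0 vs) ! i) ^ a i = (\<Sum>k<Suc (m - 1 - i). (of_nat (vs ! k) :: rat)) ^ a i"
        by simp
    qed simp
  qed
  also have "\<dots> \<in> Fil ((\<Sum>i<m. a i) + m) m"
  proof -
    have "vpoly m (\<Sum>i<m. a i * 1) W"
      unfolding W_def
    proof (rule vpoly_prod)
      fix i assume i: "i < m"
      have "vpoly m 1 (\<lambda>vs. \<Sum>k<Suc (m - 1 - i). (of_nat (vs ! k) :: rat))"
        by (rule vpoly_sum) (use i in \<open>auto intro!: vpoly_coord[unfolded One_nat_def]\<close>)
      then show "vpoly m (a i * 1) (\<lambda>vs. (\<Sum>k<Suc (m - 1 - i). of_nat (vs ! k)) ^ a i)"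
        by (rule vpoly_pow)
    qed
    from Sop_vpoly[OF this] show ?thesis by simp
  qed
  finally show ?thesis .
qed

section \<open>Truncated nested sums and the stuffle product\<close>

definition pw :: "(nat \<Rightarrow> rat fps) \<Rightarrow> (nat \<Rightarrow> rat fps) \<Rightarrow> (nat \<Rightarrow> rat fps)" where
  "pw a b = (\<lambda>u. a u * b u)"

fun Z :: "(nat \<Rightarrow> rat fps) list \<Rightarrow> nat \<Rightarrow> rat fps" where
  "Z [] N = 1"
| "Z (g # gs) N = (\<Sum>u<N. g u * Z gs u)"

lemma Z_Cons_Suc: "Z (g # gs) (Suc N) = Z (g # gs) N + g N * Z gs N"
  by simp

lemma Z_Cons_0: "Z (g # gs) 0 = 0" by simp

fun qsh :: "('a \<Rightarrow> 'a \<Rightarrow> 'a) \<Rightarrow> 'a list \<Rightarrow> 'a list \<Rightarrow> 'a list list" where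
  "qsh f [] ys = [ys]"
| "qsh f xs [] = [xs]"
| "qsh f (x # xs) (y # ys) = map ((#) x) (qsh f xs (y # ys)) @ map ((#) y) (qsh f (x # xs) ys) @
     map ((#) (f x y)) (qsh f xs ys)"

lemma sum_map_cons_Suc:
  "sum_list (map (\<lambda>c. Z c (Suc N)) (map ((#) x) L)) =
   sum_list (map (\<lambda>c. Z c N) (map ((#) x) L)) + x N * sum_list (map (\<lambda>c. Z c N) L)"
  by (induction L) (simp_all add: algebra_simps)

lemma sum_map_cons_0: "sum_list (map ((\<lambda>c. Z c 0) \<circ> (#) x) L) = 0"
  by (induction L) simp_all

lemma ring4: "((A::'a::comm_semiring_1) + a * A') * (B + b * B') = A * B + a * (A' * B) + b * (A * B') + (a * b) * (A' * B')"
  by (simp add: algebra_simps)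

lemma rearr3: "((X1::'a::comm_semiring_1) + a * Y1) + ((X2 + b * Y2) + (X3 + c * Y3)) = (X1 + (X2 + X3)) + a * Y1 + b * Y2 + c * Y3"
  by (simp add: algebra_simps)

theorem Z_stuffle: "Z as N * Z bs N = sum_list (map (\<lambda>c. Z c N) (qsh pw as bs))"
proof (induction N arbitrary: as bs)
  case 0
  show ?case
  proof (cases as)
    case Nil then show ?thesis by simp
  next
    case (Cons a as')
    then show ?thesis by (cases bs) (simp_all add: sum_map_cons_0)
  qed
next
  case (Suc N)
  show ?case
  proof (cases as)
    case Nil then show ?thesis by simp
  next
    case (Cons a as')
    show ?thesis
    proof (cases bs)
      case Nil then show ?thesis using Cons by simp
    next
      case (Cons b bs')
      have "Z as (Suc N) * Z bs (Suc N) =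
        Z (a # as') N * Z (b # bs') N + a N * (Z as' N * Z (b # bs') N)
        + b N * (Z (a # as') N * Z bs' N) + pw a b N * (Z as' N * Z bs' N)"
        unfolding \<open>as = _\<close> Cons Z_Cons_Suc pw_def by (rule ring4)
      also have "\<dots> = sum_list (map (\<lambda>c. Z c N) (qsh pw (a # as') (b # bs')))
         + a N * sum_list (map (\<lambda>c. Z c N) (qsh pw as' (b # bs')))
         + b N * sum_list (map (\<lambda>c. Z c N) (qsh pw (a # as') bs'))
         + pw a b N * sum_list (map (\<lambda>c. Z c N) (qsh pw as' bs'))"
        by (simp only: Suc.IH)
      also have "\<dots> = sum_list (map (\<lambda>c. Z c (Suc N)) (qsh pw as bs))"
        unfolding \<open>as = _\<close> Cons qsh.simps map_append sum_list_append sum_map_cons_Suc rearr3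
        by (simp only: qsh.simps map_append sum_list_append)
      finally show ?thesis .
    qed
  qed
qed

definition good :: "(nat \<Rightarrow> rat fps) \<Rightarrow> bool" where
  "good g \<longleftrightarrow> (\<forall>u i. i < u \<longrightarrow> fps_nth (g u) i = 0)"

lemma good_pw: "good a \<Longrightarrow> good (pw a b)"
  unfolding good_def pw_def by (auto simp: fps_mult_nth intro!: sum.neutral)

lemma qsh_good: "list_all good as \<Longrightarrow> list_all good bs \<Longrightarrow> c \<in> set (qsh pw as bs) \<Longrightarrow> list_all good c"
proof (induction pw as bs arbitrary: c rule: qsh.induct)
  case (1 ys) then show ?case by simp
next
  case (2 v va) then show ?case by simp
next
  case (3 x xs y ys)
  have gx: "good x" "list_all good xs" and gy: "good y" "list_all good ys" using 3(4,5) by simp_all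
  from 3(6) consider (a) c' where "c = x # c'" "c' \<in> set (qsh pw xs (y # ys))"
    | (b) c' where "c = y # c'" "c' \<in> set (qsh pw (x # xs) ys)"
    | (c) c' where "c = pw x y # c'" "c' \<in> set (qsh pw xs ys)"
    by auto
  then show ?case
  proof cases
    case a then show ?thesis using 3(1)[of c'] gx 3(5) by simp
  next
    case b then show ?thesis using 3(2)[of c'] gy 3(4) by simp
  next
    case c then show ?thesis using 3(3)[of c'] gx gy good_pw[of x y] by simp
  qed
qed

lemma Z_stab:
  assumes "list_all good gs" "n < N"
  shows "fps_nth (Z gs N) n = fps_nth (Z gs (Suc n)) n"
proof (cases gs)
  case Nil then show ?thesis by simp
next
  case (Cons g gs')
  have g: "good g" using assms Cons by simp
  have split: "{..<N} = {..<Suc n} \<union> {Suc n..<N}" using assms by auto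
  have z: "fps_nth (g u * Z gs' u) n = 0" if "u \<in> {Suc n..<N}" for u
    using g that unfolding good_def by (auto simp: fps_mult_nth intro!: sum.neutral)
  have "fps_nth (Z gs N) n = (\<Sum>u<N. fps_nth (g u * Z gs' u) n)" unfolding Cons by (simp add: fps_sum_nth)
  also have "\<dots> = (\<Sum>u<Suc n. fps_nth (g u * Z gs' u) n) + (\<Sum>u\<in>{Suc n..<N}. fps_nth (g u * Z gs' u) n)"
    unfolding split by (rule sum.union_disjoint) auto
  also have "(\<Sum>u\<in>{Suc n..<N}. fps_nth (g u * Z gs' u) n) = 0" using z by simp
  also have "(\<Sum>u<Suc n. fps_nth (g u * Z gs' u) n) = fps_nth (Z gs (Suc n)) n" unfolding Cons by (simp add: fps_sum_nth)
  finally show ?thesis by simp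
qed

definition Zinf :: "(nat \<Rightarrow> rat fps) list \<Rightarrow> rat fps" where
  "Zinf gs = Abs_fps (\<lambda>n. fps_nth (Z gs (Suc n)) n)"

lemma sum_list_fps_nth: "fps_nth (sum_list xs) n = sum_list (map (\<lambda>x. fps_nth x n) xs)"
  by (induction xs) auto

theorem Zinf_stuffle:
  assumes "list_all good as" "list_all good bs"
  shows "Zinf as * Zinf bs = sum_list (map Zinf (qsh pw as bs))"
proof (rule fps_ext)
  fix n
  have "fps_nth (Zinf as * Zinf bs) n = (\<Sum>i=0..n. fps_nth (Z as (Suc i)) i * fps_nth (Z bs (Suc (n - i))) (n - i))"
    unfolding Zinf_def fps_mult_nth by simp
  also have "\<dots> = (\<Sum>i=0..n. fps_nth (Z as (Suc n)) i * fps_nth (Z bs (Suc n)) (n - i))"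
  proof (rule sum.cong)
    fix i assume "i \<in> {0..n}"
    then have "i < Suc n" "n - i < Suc n" by auto
    show "fps_nth (Z as (Suc i)) i * fps_nth (Z bs (Suc (n - i))) (n - i) = fps_nth (Z as (Suc n)) i * fps_nth (Z bs (Suc n)) (n - i)"
      using Z_stab[OF assms(1) \<open>i < Suc n\<close>] Z_stab[OF assms(2) \<open>n - i < Suc n\<close>] by simp
  qed simp
  also have "\<dots> = fps_nth (Z as (Suc n) * Z bs (Suc n)) n" unfolding fps_mult_nth ..
  also have "\<dots> = sum_list (map (\<lambda>c. fps_nth (Z c (Suc n)) n) (qsh pw as bs))"
    unfolding Z_stuffle sum_list_fps_nth by (simp add: comp_def)
  also have "\<dots> = fps_nth (sum_list (map Zinf (qsh pw as bs))) n"
    unfolding sum_list_fps_nth Zinf_def by (simp add: comp_def)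
  finally show "fps_nth (Zinf as * Zinf bs) n = fps_nth (sum_list (map Zinf (qsh pw as bs))) n" .
qed

definition G :: "(nat \<Rightarrow> nat \<Rightarrow> rat) \<Rightarrow> nat \<Rightarrow> rat fps" where
  "G h u = (if u = 0 then 0 else Abs_fps (\<lambda>n. if 0 < n \<and> u dvd n then h u (n div u) else 0))"

lemma good_G: "good (G h)"
  unfolding good_def G_def by (auto dest: dvd_imp_le)

lemma list_all_good_G: "list_all good (map G hs)"
  by (simp add: list_all_iff good_G)

lemma G_cong: "(\<And>u v. 0 < u \<Longrightarrow> 0 < v \<Longrightarrow> h u v = h' u v) \<Longrightarrow> G h = G h'"
  unfolding G_def by (intro ext) (auto intro!: fps_ext simp: dvd_def)

lemma G_add: "G (\<lambda>u v. h1 u v + h2 u v) u = G h1 u + G h2 u"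
  unfolding G_def by (auto intro!: fps_ext)

lemma G_smult: "G (\<lambda>u v. c * h u v) u = fps_const c * G h u"
  unfolding G_def by (auto intro!: fps_ext)

lemma G_sum: "finite A \<Longrightarrow> G (\<lambda>u v. \<Sum>a\<in>A. h a u v) u = (\<Sum>a\<in>A. G (h a) u)"
  by (induction A rule: finite_induct) (simp_all add: G_add, simp add: G_def fps_zero_def)

lemma coeff_G_mult:
  assumes u: "0 < u"
  shows "fps_nth (G h u * X) n = (\<Sum>v\<in>{1..n div u}. h u v * fps_nth X (n - u * v))"
proof -
  have "fps_nth (G h u * X) n = (\<Sum>i=0..n. (if 0 < i \<and> u dvd i then h u (i div u) * fps_nth X (n - i) else 0))"
    unfolding fps_mult_nth G_def using u by (intro sum.cong) auto
  also have "\<dots> = (\<Sum>i\<in>{i\<in>{0..n}. 0 < i \<and> u dvd i}. h u (i div u) * fps_nth X (n - i))"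
    by (rule sum.inter_filter[symmetric]) simp
  also have "{i\<in>{0..n}. 0 < i \<and> u dvd i} = (\<lambda>v. u * v) ` {1..n div u}"
  proof (intro set_eqI iffI)
    fix i assume "i \<in> {i\<in>{0..n}. 0 < i \<and> u dvd i}"
    then have i1: "i \<le> n" "0 < i" "u dvd i" by auto
    then obtain v where iv: "i = u * v" by (elim dvdE)
    have "v * u \<le> n" using i1 iv by (simp add: mult.commute)
    then have "v \<le> n div u" using u less_eq_div_iff_mult_less_eq by blast
    moreover have "1 \<le> v" using i1 iv by (cases v) auto
    ultimately have "v \<in> {1..n div u}" by simp
    then have "u * v \<in> (\<lambda>v. u * v) ` {1..n div u}" by (rule imageI)
    then show "i \<in> (\<lambda>v. u * v) ` {1..n div u}" using iv by simp
  next
    fix i assume "i \<in> (\<lambda>v. u * v) ` {1..n div u}"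
    then obtain v where v0: "v \<in> {1..n div u}" "i = u * v" by (elim imageE)
    then have v: "i = u * v" "1 \<le> v" "v \<le> n div u" by auto
    then have "v * u \<le> n" using u less_eq_div_iff_mult_less_eq by blast
    then have "i \<le> n" using v(1) by (simp add: mult.commute)
    moreover have "0 < i" using v(1,2) u by simp
    moreover have "u dvd i" using v(1) by simp
    ultimately show "i \<in> {i\<in>{0..n}. 0 < i \<and> u dvd i}" by simp
  qed
  also have "(\<Sum>i\<in>(\<lambda>v. u * v) ` {1..n div u}. h u (i div u) * fps_nth X (n - i)) =
      (\<Sum>v\<in>{1..n div u}. h u v * fps_nth X (n - u * v))"
    using u by (subst sum.reindex) (auto simp: inj_on_def)
  finally show ?thesis .
qed

definition conv :: "(nat \<Rightarrow> nat \<Rightarrow> rat) \<Rightarrow> (nat \<Rightarrow> nat \<Rightarrow> rat) \<Rightarrow> nat \<Rightarrow> nat \<Rightarrow> rat" where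
  "conv h1 h2 u v = (\<Sum>v1\<in>{1..<v}. h1 u v1 * h2 u (v - v1))"

lemma pw_G: "pw (G h1) (G h2) = G (conv h1 h2)"
proof (rule ext)
  fix u
  show "pw (G h1) (G h2) u = G (conv h1 h2) u"
  proof (cases "u = 0")
    case True then show ?thesis by (simp add: pw_def G_def)
  next
    case False
    then have u: "0 < u" by simp
    show ?thesis
    proof (rule fps_ext)
      fix n
      have "fps_nth (pw (G h1) (G h2) u) n = (\<Sum>v\<in>{1..n div u}. h1 u v * fps_nth (G h2 u) (n - u * v))"
        unfolding pw_def by (rule coeff_G_mult[OF u])
      also have "\<dots> = fps_nth (G (conv h1 h2) u) n"
      proof (cases "u dvd n")
        case True
        then obtain w where n: "n = u * w" by (auto elim: dvdE)
        have nd: "n div u = w" using u n by simp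
        have "(\<Sum>v\<in>{1..w}. h1 u v * fps_nth (G h2 u) (n - u * v)) = (\<Sum>v\<in>{1..w}. if v < w then h1 u v * h2 u (w - v) else 0)"
        proof (rule sum.cong)
          fix v assume v: "v \<in> {1..w}"
          have e: "n - u * v = u * (w - v)" unfolding n by (simp add: diff_mult_distrib2)
          show "h1 u v * fps_nth (G h2 u) (n - u * v) = (if v < w then h1 u v * h2 u (w - v) else 0)"
            unfolding e G_def using u v by auto
        qed simp
        also have "\<dots> = (\<Sum>v\<in>{1..<w}. h1 u v * h2 u (w - v))"
          by (subst sum.inter_filter[symmetric]) (auto intro!: sum.cong)
        finally show ?thesis unfolding nd G_def conv_def using u n by auto
      next
        case False
        have "fps_nth (G h2 u) (n - u * v) = 0" if "v \<in> {1..n div u}" for v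
        proof -
          have "u * v \<le> n" using that u by (simp add: less_eq_div_iff_mult_less_eq mult.commute)
          then have "\<not> u dvd (n - u * v)" using False by (metis dvd_diff_nat dvd_triv_left le_add_diff_inverse dvd_add_right_iff)
          then show ?thesis unfolding G_def by simp
        qed
        then show ?thesis using False u by (simp add: G_def)
      qed
      finally show "fps_nth (pw (G h1) (G h2) u) n = fps_nth (G (conv h1 h2) u) n" .
    qed
  qed
qed

definition Rset :: "nat \<Rightarrow> nat \<Rightarrow> nat \<Rightarrow> (nat list \<times> nat list) set" where
  "Rset m n N = {x \<in> bb_index m n. \<forall>u\<in>set (fst x). u < N}"

definition Pw :: "(nat \<Rightarrow> nat \<Rightarrow> rat) list \<Rightarrow> nat list \<times> nat list \<Rightarrow> rat" where
  "Pw hs x = (\<Prod>j<length hs. (hs ! j) (fst x ! j) (snd x ! j))"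

lemma finite_Rset: "finite (Rset m n N)"
  unfolding Rset_def using finite_bb_index by simp

lemma Pw_Cons: "Pw (h # hs) (u # us, v # vs) = h u v * Pw hs (us, vs)"
  unfolding Pw_def by (simp add: prod.lessThan_Suc_shift del: prod.lessThan_Suc)

lemma Rset_Cons:
  "Rset (Suc m) n N = (\<lambda>(u, v, x). (u # fst x, v # snd x)) `
     (SIGMA u:{1..<N}. SIGMA v:{1..n div u}. Rset m (n - u * v) u)"
proof (intro set_eqI iffI)
  fix y assume y: "y \<in> Rset (Suc m) n N"
  obtain us' vs' where yy: "y = (us', vs')" by (cases y)
  have A: "length us' = Suc m" "length vs' = Suc m" "sorted_wrt (>) us'" "\<forall>u\<in>set us'. 0 < u"
    "\<forall>v\<in>set vs'. 0 < v" "(\<Sum>j<Suc m. us' ! j * vs' ! j) = n" "\<forall>u\<in>set us'. u < N"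
    using y unfolding yy Rset_def bb_index_def by auto
  obtain u us where us': "us' = u # us" using A(1) by (cases us') auto
  obtain v vs where vs': "vs' = v # vs" using A(2) by (cases vs') auto
  have s: "u * v + (\<Sum>j<m. us ! j * vs ! j) = n"
    using A(6) unfolding us' vs' by (simp add: sum.lessThan_Suc_shift del: sum.lessThan_Suc)
  have u: "0 < u" "u < N" and v: "0 < v" using A us' vs' by auto
  have "v * u \<le> n" using s by (simp add: mult.commute)
  then have vle: "v \<le> n div u" using u less_eq_div_iff_mult_less_eq by blast
  have "(us, vs) \<in> Rset m (n - u * v) u"
    unfolding Rset_def bb_index_def using A s unfolding us' vs' by auto
  then have "(u, v, (us, vs)) \<in> (SIGMA u:{1..<N}. SIGMA v:{1..n div u}. Rset m (n - u * v) u)"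
    using u v vle by auto
  moreover have "y = (\<lambda>(u, v, x). (u # fst x, v # snd x)) (u, v, (us, vs))"
    unfolding yy us' vs' by simp
  ultimately show "y \<in> (\<lambda>(u, v, x). (u # fst x, v # snd x)) ` (SIGMA u:{1..<N}. SIGMA v:{1..n div u}. Rset m (n - u * v) u)"
    by (rule rev_image_eqI)
next
  fix y assume "y \<in> (\<lambda>(u, v, x). (u # fst x, v # snd x)) ` (SIGMA u:{1..<N}. SIGMA v:{1..n div u}. Rset m (n - u * v) u)"
  then obtain u v us vs where y: "y = (u # us, v # vs)" and u: "1 \<le> u" "u < N" and v: "1 \<le> v" "v \<le> n div u"
    and x: "(us, vs) \<in> Rset m (n - u * v) u" by auto
  have B: "length us = m" "length vs = m" "sorted_wrt (>) us" "\<forall>u\<in>set us. 0 < u"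
    "\<forall>v\<in>set vs. 0 < v" "(\<Sum>j<m. us ! j * vs ! j) = n - u * v" "\<forall>w\<in>set us. w < u"
    using x unfolding Rset_def bb_index_def by auto
  have "v * u \<le> n" using v u less_eq_div_iff_mult_less_eq by simp
  then have uv: "u * v \<le> n" by (simp add: mult.commute)
  have "(\<Sum>j<Suc m. (u # us) ! j * (v # vs) ! j) = n"
    using B(6) uv by (simp add: sum.lessThan_Suc_shift del: sum.lessThan_Suc)
  then show "y \<in> Rset (Suc m) n N"
    unfolding y Rset_def bb_index_def using B u v by auto
qed

lemma Z_bridge:
  "fps_nth (Z (map G hs) N) n = (\<Sum>x\<in>Rset (length hs) n N. Pw hs x)"
proof (induction hs arbitrary: N n)
  case Nil
  have "Rset 0 n N = (if n = 0 then {([], [])} else {})" by (auto simp: Rset_def bb_index_0)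
  then show ?case by (simp add: Pw_def)
next
  case (Cons h hs)
  define m where "m = length hs"
  define SS where "SS = (SIGMA u:{1..<N}. SIGMA v:{1..n div u}. Rset m (n - u * v) u)"
  define phi where "phi = (\<lambda>(u::nat, v::nat, x::nat list \<times> nat list). (u # fst x, v # snd x))"
  have inj: "inj_on phi SS" unfolding phi_def SS_def inj_on_def by auto
  have "fps_nth (Z (map G (h # hs)) N) n = (\<Sum>u<N. fps_nth (G h u * Z (map G hs) u) n)"
    by (simp add: fps_sum_nth)
  also have "\<dots> = (\<Sum>u\<in>{1..<N}. fps_nth (G h u * Z (map G hs) u) n)"
  proof (rule sum.mono_neutral_right)
    show "\<forall>i\<in>{..<N} - {1..<N}. fps_nth (G h i * Z (map G hs) i) n = 0"
      by (auto simp: G_def)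
  qed auto
  also have "\<dots> = (\<Sum>u\<in>{1..<N}. \<Sum>v\<in>{1..n div u}. \<Sum>x\<in>Rset m (n - u * v) u. h u v * Pw hs x)"
  proof (rule sum.cong)
    fix u assume "u \<in> {1..<N}"
    then have u: "0 < u" by simp
    show "fps_nth (G h u * Z (map G hs) u) n = (\<Sum>v\<in>{1..n div u}. \<Sum>x\<in>Rset m (n - u * v) u. h u v * Pw hs x)"
      unfolding coeff_G_mult[OF u] Cons.IH m_def by (simp add: sum_distrib_left)
  qed simp
  also have "\<dots> = (\<Sum>z\<in>SS. case z of (u, v, x) \<Rightarrow> h u v * Pw hs x)"
  proof -
    have "(\<Sum>v\<in>{1..n div u}. \<Sum>x\<in>Rset m (n - u * v) u. h u v * Pw hs x) =
          (\<Sum>p\<in>(SIGMA v:{1..n div u}. Rset m (n - u * v) u). case p of (v, x) \<Rightarrow> h u v * Pw hs x)" for u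
      by (rule sum.Sigma) (auto simp: finite_Rset)
    then have "(\<Sum>u\<in>{1..<N}. \<Sum>v\<in>{1..n div u}. \<Sum>x\<in>Rset m (n - u * v) u. h u v * Pw hs x) =
          (\<Sum>u\<in>{1..<N}. \<Sum>p\<in>(SIGMA v:{1..n div u}. Rset m (n - u * v) u). case p of (v, x) \<Rightarrow> h u v * Pw hs x)"
      by simp
    also have "\<dots> = (\<Sum>z\<in>SS. case z of (u, v, x) \<Rightarrow> h u v * Pw hs x)"
      unfolding SS_def by (subst sum.Sigma) (auto simp: finite_Rset case_prod_unfold)
    finally show ?thesis .
  qed
  also have "\<dots> = (\<Sum>z\<in>SS. Pw (h # hs) (phi z))"
    by (rule sum.cong) (auto simp: phi_def Pw_Cons)
  also have "\<dots> = (\<Sum>y\<in>phi ` SS. Pw (h # hs) y)"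
    using inj by (simp add: sum.reindex)
  also have "phi ` SS = Rset (length (h # hs)) n N"
    unfolding phi_def SS_def m_def by (simp add: Rset_Cons)
  finally show ?case .
qed

lemma Zinf_bridge: "Zinf (map G hs) = Sop (length hs) (\<lambda>us vs. \<Prod>j<length hs. (hs ! j) (us ! j) (vs ! j))"
proof (rule fps_ext)
  fix n
  have "Rset (length hs) n (Suc n) = bb_index (length hs) n"
    unfolding Rset_def using bb_index_bound by fastforce
  then show "fps_nth (Zinf (map G hs)) n = fps_nth (Sop (length hs) (\<lambda>us vs. \<Prod>j<length hs. (hs ! j) (us ! j) (vs ! j))) n"
    unfolding Zinf_def Sop_def by (simp add: Z_bridge Pw_def case_prod_unfold)
qed

section \<open>Polynomial functions of one variable\<close>

definition pv :: "nat \<Rightarrow> (nat \<Rightarrow> rat) \<Rightarrow> bool" where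
  "pv D f \<longleftrightarrow> (\<exists>P. degree P \<le> D \<and> (\<forall>v\<ge>1. f v = poly P (of_nat v)))"

lemma pv_mono: "pv D f \<Longrightarrow> D \<le> D' \<Longrightarrow> pv D' f"
  unfolding pv_def by (meson order_trans)

lemma pv_add: "pv D f \<Longrightarrow> pv D g \<Longrightarrow> pv D (\<lambda>v. f v + g v)"
  unfolding pv_def by (metis degree_add_le poly_add)

lemma pv_smult: "pv D f \<Longrightarrow> pv D (\<lambda>v. c * f v)"
  unfolding pv_def by (metis degree_smult_le order_trans poly_smult)

lemma pv_mult: "pv D1 f \<Longrightarrow> pv D2 g \<Longrightarrow> pv (D1 + D2) (\<lambda>v. f v * g v)"
  unfolding pv_def by (metis (no_types, lifting) add_mono degree_mult_le order_trans poly_mult)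

lemma pv_const: "pv 0 (\<lambda>v. c)"
  unfolding pv_def by (rule exI[of _ "[:c:]"]) simp

lemma pv_id_pow: "pv k (\<lambda>v. of_nat v ^ k)"
  unfolding pv_def by (rule exI[of _ "monom 1 k"]) (simp add: degree_monom_le poly_monom)

lemma pv_sum: "finite A \<Longrightarrow> (\<And>a. a \<in> A \<Longrightarrow> pv D (f a)) \<Longrightarrow> pv D (\<lambda>v. \<Sum>a\<in>A. f a v)"
proof (induction A rule: finite_induct)
  case empty then show ?case using pv_const[of 0] pv_mono by fastforce
next
  case (insert x F) then show ?case using pv_add[of D "f x" "\<lambda>v. \<Sum>a\<in>F. f a v"] by simp
qed

lemma powsum_poly: "\<exists>P::rat poly. degree P \<le> Suc k \<and> (\<forall>n. (\<Sum>x<n. of_nat x ^ k) = poly P (of_nat n))"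
proof (induction k rule: less_induct)
  case (less k)
  then have "\<forall>i. \<exists>P::rat poly. i < k \<longrightarrow> degree P \<le> Suc i \<and> (\<forall>n. (\<Sum>x<n. of_nat x ^ i) = poly P (of_nat n))"
    by blast
  then obtain Q where Q0: "\<forall>i. i < k \<longrightarrow> degree (Q i) \<le> Suc i \<and> (\<forall>n. (\<Sum>x<n. (of_nat x :: rat) ^ i) = poly (Q i) (of_nat n))"
    by (metis choice)
  then have Q: "\<And>i. i < k \<Longrightarrow> degree (Q i) \<le> Suc i \<and> (\<forall>n. (\<Sum>x<n. (of_nat x :: rat) ^ i) = poly (Q i) (of_nat n))"
    by blast
  define R where "R = monom (1::rat) (Suc k) - (\<Sum>i<k. smult (of_nat (Suc k choose i)) (Q i))"
  define P where "P = smult (1 / of_nat (Suc k)) R"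
  have degR: "degree R \<le> Suc k"
    unfolding R_def
  proof (rule degree_diff_le)
    show "degree (monom (1::rat) (Suc k)) \<le> Suc k" by (rule degree_monom_le)
    show "degree (\<Sum>i<k. smult (of_nat (Suc k choose i)) (Q i)) \<le> Suc k"
    proof (rule degree_sum_le)
      fix i assume "i \<in> {..<k}"
      then show "degree (smult (of_nat (Suc k choose i)) (Q i)) \<le> Suc k"
        using Q[of i] degree_smult_le order_trans by fastforce
    qed simp
  qed
  have tele: "(of_nat x + 1 :: rat) ^ Suc k - of_nat x ^ Suc k = (\<Sum>i\<le>k. of_nat (Suc k choose i) * of_nat x ^ i)" for x
  proof -
    have "(of_nat x + 1 :: rat) ^ Suc k = (\<Sum>i\<le>Suc k. of_nat (Suc k choose i) * of_nat x ^ i * 1 ^ (Suc k - i))"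
      by (rule binomial_ring)
    also have "\<dots> = (\<Sum>i\<le>k. of_nat (Suc k choose i) * of_nat x ^ i) + of_nat x ^ Suc k"
      by simp
    finally show ?thesis by simp
  qed
  have key: "of_nat (Suc k) * (\<Sum>x<n. (of_nat x :: rat) ^ k) = poly R (of_nat n)" for n
  proof -
    have "(\<Sum>x<n. (of_nat x + 1 :: rat) ^ Suc k - of_nat x ^ Suc k) = of_nat n ^ Suc k"
      by (induction n) (simp_all add: algebra_simps)
    also have "(\<Sum>x<n. (of_nat x + 1 :: rat) ^ Suc k - of_nat x ^ Suc k) =
        (\<Sum>x<n. \<Sum>i\<le>k. of_nat (Suc k choose i) * of_nat x ^ i)"
      unfolding tele ..
    also have "\<dots> = (\<Sum>i\<le>k. \<Sum>x<n. of_nat (Suc k choose i) * of_nat x ^ i)"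
      by (rule sum.swap)
    also have "\<dots> = (\<Sum>i\<le>k. of_nat (Suc k choose i) * (\<Sum>x<n. of_nat x ^ i))"
      by (simp add: sum_distrib_left)
    also have "\<dots> = (\<Sum>i<k. of_nat (Suc k choose i) * (\<Sum>x<n. of_nat x ^ i)) + of_nat (Suc k) * (\<Sum>x<n. of_nat x ^ k)"
      by (simp add: lessThan_Suc_atMost[symmetric])
    finally have "of_nat (Suc k) * (\<Sum>x<n. (of_nat x :: rat) ^ k) = of_nat n ^ Suc k - (\<Sum>i<k. of_nat (Suc k choose i) * (\<Sum>x<n. of_nat x ^ i))"
      by (simp add: algebra_simps)
    also have "\<dots> = poly R (of_nat n)"
      unfolding R_def using Q by (simp add: poly_sum poly_monom)
    finally show ?thesis .
  qed
  have "degree P \<le> Suc k" unfolding P_def using degR degree_smult_le order_trans by blast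
  moreover have "(\<Sum>x<n. (of_nat x :: rat) ^ k) = poly P (of_nat n)" for n
    unfolding P_def using key[of n] by (simp add: field_simps)
  ultimately show ?case by blast
qed

lemma pv_powsum: "pv (Suc c) (\<lambda>v. \<Sum>x\<in>{1..<v}. (of_nat x :: rat) ^ c)"
proof -
  obtain P :: "rat poly" where P: "degree P \<le> Suc c" "\<And>n. (\<Sum>x<n. of_nat x ^ c) = poly P (of_nat n)"
    using powsum_poly[of c] by blast
  define Q where "Q = P - (if c = 0 then [:1:] else 0)"
  have "degree Q \<le> Suc c" unfolding Q_def using P(1) by (intro degree_diff_le) auto
  moreover have "(\<Sum>x\<in>{1..<v}. (of_nat x :: rat) ^ c) = poly Q (of_nat v)" if "v \<ge> 1" for v
  proof -
    have "{..<v} = insert 0 {1..<v}" using that by auto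
    then have "(\<Sum>x<v. (of_nat x :: rat) ^ c) = 0 ^ c + (\<Sum>x\<in>{1..<v}. of_nat x ^ c)" by simp
    then show ?thesis unfolding Q_def using P(2)[of v] by auto
  qed
  ultimately show ?thesis unfolding pv_def by blast
qed

lemma pv_conv_mono: "pv (a + b + 1) (\<lambda>v. \<Sum>x\<in>{1..<v}. (of_nat x :: rat) ^ a * (of_nat v - of_nat x) ^ b)"
proof -
  have eq: "(\<Sum>x\<in>{1..<v}. (of_nat x :: rat) ^ a * (of_nat v - of_nat x) ^ b) =
      (\<Sum>j\<le>b. (of_nat (b choose j) * (-1) ^ (b - j)) * (of_nat v ^ j * (\<Sum>x\<in>{1..<v}. of_nat x ^ (a + (b - j)))))" for v
  proof -
    have bin: "(of_nat v - of_nat x :: rat) ^ b = (\<Sum>j\<le>b. of_nat (b choose j) * of_nat v ^ j * (- of_nat x) ^ (b - j))" for x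
      using binomial_ring[of "of_nat v :: rat" "- of_nat x" b] by simp
    have t: "(of_nat x :: rat) ^ a * (of_nat (b choose j) * of_nat v ^ j * (- of_nat x) ^ (b - j)) =
        (of_nat (b choose j) * (-1) ^ (b - j)) * (of_nat v ^ j * of_nat x ^ (a + (b - j)))" for x j
    proof -
      have "(- (of_nat x :: rat)) ^ (b - j) = (-1) ^ (b - j) * of_nat x ^ (b - j)"
        by (rule power_minus)
      then show ?thesis by (simp add: power_add)
    qed
    have "(\<Sum>x\<in>{1..<v}. (of_nat x :: rat) ^ a * (of_nat v - of_nat x) ^ b) =
        (\<Sum>x\<in>{1..<v}. \<Sum>j\<le>b. (of_nat x :: rat) ^ a * (of_nat (b choose j) * of_nat v ^ j * (- of_nat x) ^ (b - j)))"
      unfolding bin by (simp only: sum_distrib_left)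
    also have "\<dots> = (\<Sum>x\<in>{1..<v}. \<Sum>j\<le>b. (of_nat (b choose j) * (-1) ^ (b - j)) * (of_nat v ^ j * of_nat x ^ (a + (b - j))))"
      unfolding t ..
    finally have "(\<Sum>x\<in>{1..<v}. (of_nat x :: rat) ^ a * (of_nat v - of_nat x) ^ b) =
        (\<Sum>x\<in>{1..<v}. \<Sum>j\<le>b. (of_nat (b choose j) * (-1) ^ (b - j)) * (of_nat v ^ j * of_nat x ^ (a + (b - j))))" .
    then have "(\<Sum>x\<in>{1..<v}. (of_nat x :: rat) ^ a * (of_nat v - of_nat x) ^ b) =
        (\<Sum>x\<in>{1..<v}. \<Sum>j\<le>b. (of_nat (b choose j) * (-1) ^ (b - j)) * (of_nat v ^ j * of_nat x ^ (a + (b - j))))" .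
    also have "\<dots> = (\<Sum>j\<le>b. \<Sum>x\<in>{1..<v}. (of_nat (b choose j) * (-1) ^ (b - j)) * (of_nat v ^ j * of_nat x ^ (a + (b - j))))"
      by (rule sum.swap)
    also have "\<dots> = (\<Sum>j\<le>b. (of_nat (b choose j) * (-1) ^ (b - j)) * (of_nat v ^ j * (\<Sum>x\<in>{1..<v}. of_nat x ^ (a + (b - j)))))"
      by (simp add: sum_distrib_left)
    finally show ?thesis .
  qed
  have "pv (a + b + 1) (\<lambda>v. \<Sum>j\<le>b. (of_nat (b choose j) * (-1) ^ (b - j)) * (of_nat v ^ j * (\<Sum>x\<in>{1..<v}. (of_nat x :: rat) ^ (a + (b - j)))))"
  proof (rule pv_sum)
    fix j assume j: "j \<in> {..b}"
    have "pv (j + Suc (a + (b - j))) (\<lambda>v. of_nat v ^ j * (\<Sum>x\<in>{1..<v}. (of_nat x :: rat) ^ (a + (b - j))))"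
      by (rule pv_mult[OF pv_id_pow pv_powsum])
    moreover have "j + Suc (a + (b - j)) = a + b + 1" using j by simp
    ultimately show "pv (a + b + 1) (\<lambda>v. (of_nat (b choose j) * (-1) ^ (b - j)) * (of_nat v ^ j * (\<Sum>x\<in>{1..<v}. (of_nat x :: rat) ^ (a + (b - j)))))"
      by (intro pv_smult) simp
  qed simp
  then show ?thesis unfolding eq .
qed

section \<open>Weighted v-polynomial functions and products in the filtration\<close>

definition vp :: "nat \<Rightarrow> (nat \<Rightarrow> nat \<Rightarrow> rat) \<Rightarrow> bool" where
  "vp d h \<longleftrightarrow> 1 \<le> d \<and> (\<exists>P. degree P < d \<and> (\<forall>u v. 0 < u \<longrightarrow> 0 < v \<longrightarrow> h u v = poly P (of_nat v)))"

lemma vp_conv: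
  assumes "vp d1 h1" "vp d2 h2"
  shows "vp (d1 + d2) (conv h1 h2)"
proof -
  obtain P1 where P1: "degree P1 < d1" "\<And>u v. 0 < u \<Longrightarrow> 0 < v \<Longrightarrow> h1 u v = poly P1 (of_nat v)" "1 \<le> d1"
    using assms(1) unfolding vp_def by blast
  obtain P2 where P2: "degree P2 < d2" "\<And>u v. 0 < u \<Longrightarrow> 0 < v \<Longrightarrow> h2 u v = poly P2 (of_nat v)" "1 \<le> d2"
    using assms(2) unfolding vp_def by blast
  define F where "F v = (\<Sum>i\<le>degree P1. \<Sum>j\<le>degree P2. (coeff P1 i * coeff P2 j) *
      (\<Sum>x\<in>{1..<v}. (of_nat x :: rat) ^ i * (of_nat v - of_nat x) ^ j))" for v
  have "pv (d1 + d2 - 1) F"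
    unfolding F_def
  proof (intro pv_sum pv_smult)
    fix i j assume "i \<in> {..degree P1}" "j \<in> {..degree P2}"
    then have "i + j + 1 \<le> d1 + d2 - 1" using P1(1) P2(1) by auto
    then show "pv (d1 + d2 - 1) (\<lambda>v. \<Sum>x\<in>{1..<v}. (of_nat x :: rat) ^ i * (of_nat v - of_nat x) ^ j)"
      by (rule pv_mono[OF pv_conv_mono])
  qed auto
  then obtain P where P: "degree P \<le> d1 + d2 - 1" "\<And>v. v \<ge> 1 \<Longrightarrow> F v = poly P (of_nat v)"
    unfolding pv_def by blast
  have "conv h1 h2 u v = F v" if "0 < u" "0 < v" for u v
  proof -
    have "conv h1 h2 u v = (\<Sum>x\<in>{1..<v}. poly P1 (of_nat x) * poly P2 (of_nat v - of_nat x))"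
      unfolding conv_def using that by (intro sum.cong) (auto simp: P1(2) P2(2) of_nat_diff)
    also have "\<dots> = (\<Sum>x\<in>{1..<v}. \<Sum>i\<le>degree P1. \<Sum>j\<le>degree P2. (coeff P1 i * coeff P2 j) * ((of_nat x :: rat) ^ i * (of_nat v - of_nat x) ^ j))"
      unfolding poly_altdef by (simp add: sum_product algebra_simps)
    also have "\<dots> = (\<Sum>i\<le>degree P1. \<Sum>x\<in>{1..<v}. \<Sum>j\<le>degree P2. (coeff P1 i * coeff P2 j) * ((of_nat x :: rat) ^ i * (of_nat v - of_nat x) ^ j))"
      by (rule sum.swap)
    also have "\<dots> = (\<Sum>i\<le>degree P1. \<Sum>j\<le>degree P2. \<Sum>x\<in>{1..<v}. (coeff P1 i * coeff P2 j) * ((of_nat x :: rat) ^ i * (of_nat v - of_nat x) ^ j))"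
      by (rule sum.cong[OF refl], rule sum.swap)
    also have "\<dots> = F v"
      unfolding F_def by (simp add: sum_distrib_left)
    finally show ?thesis .
  qed
  then show ?thesis unfolding vp_def using P P1(3) P2(3) by (intro conjI exI[of _ P]) auto
qed

lemma sum_minus_one: "(\<And>j. j < m \<Longrightarrow> 1 \<le> f j) \<Longrightarrow> (\<Sum>j<m. f j - 1) + m = (\<Sum>j<m. f j :: nat)"
proof (induction m)
  case 0 then show ?case by simp
next
  case (Suc m)
  have IH: "(\<Sum>j<m. f j - 1) + m = (\<Sum>j<m. f j)" using Suc by simp
  have "1 \<le> f m" using Suc by simp
  then show ?case using IH by simp
qed

lemma vpoly_poly_coord: "j < m \<Longrightarrow> degree P \<le> D \<Longrightarrow> vpoly m D (\<lambda>vs. poly P (of_nat (vs ! j)))"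
  unfolding poly_altdef
proof (rule vpoly_sum)
  fix i assume j: "j < m" and P: "degree P \<le> D" and i: "i \<in> {..degree P}"
  have "vpoly m (i * 1) (\<lambda>vs. (of_nat (vs ! j) :: rat) ^ i)"
    by (rule vpoly_pow[OF vpoly_coord[OF j]])
  then have "vpoly m D (\<lambda>vs. (of_nat (vs ! j) :: rat) ^ i)"
    by (rule vpoly_mono_deg) (use i P in auto)
  then show "vpoly m D (\<lambda>vs. coeff P i * of_nat (vs ! j) ^ i)"
    by (rule vpoly_smult)
qed simp

lemma Zinf_vp_Fil:
  assumes "list_all2 vp ds hs"
  shows "Zinf (map G hs) \<in> Fil (sum_list ds) (length hs)"
proof -
  define m where "m = length hs"
  have lens: "length ds = m" using assms unfolding m_def by (simp add: list_all2_lengthD)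
  have "\<forall>j. \<exists>P. j < m \<longrightarrow> degree P < ds ! j \<and> 1 \<le> ds ! j \<and> (\<forall>u v. 0 < u \<longrightarrow> 0 < v \<longrightarrow> (hs ! j) u v = poly P (of_nat v))"
  proof
    fix j
    show "\<exists>P. j < m \<longrightarrow> degree P < ds ! j \<and> 1 \<le> ds ! j \<and> (\<forall>u v. 0 < u \<longrightarrow> 0 < v \<longrightarrow> (hs ! j) u v = poly P (of_nat v))"
    proof (cases "j < m")
      case True
      then have "vp (ds ! j) (hs ! j)" using assms lens unfolding m_def list_all2_conv_all_nth by auto
      then show ?thesis unfolding vp_def by blast
    qed simp
  qed
  then obtain Pf where Pf: "\<forall>j. j < m \<longrightarrow> degree (Pf j) < ds ! j \<and> 1 \<le> ds ! j \<and> (\<forall>u v. 0 < u \<longrightarrow> 0 < v \<longrightarrow> (hs ! j) u v = poly (Pf j) (of_nat v))"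
    by (metis choice)
  have "Zinf (map G hs) = Sop m (\<lambda>us vs. \<Prod>j<m. (hs ! j) (us ! j) (vs ! j))"
    unfolding Zinf_bridge m_def ..
  also have "\<dots> = Sop m (\<lambda>us vs. \<Prod>j<m. poly (Pf j) (of_nat (vs ! j)))"
  proof (rule Sop_cong)
    fix us vs n assume x: "(us, vs) \<in> bb_index m n"
    show "(\<Prod>j<m. (hs ! j) (us ! j) (vs ! j)) = (\<Prod>j<m. poly (Pf j) (of_nat (vs ! j)))"
    proof (rule prod.cong)
      fix j assume "j \<in> {..<m}"
      then have j: "j < m" by simp
      have "0 < us ! j" "0 < vs ! j" using x j unfolding bb_index_def by auto
      then show "(hs ! j) (us ! j) (vs ! j) = poly (Pf j) (of_nat (vs ! j))" using Pf j by blast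
    qed simp
  qed
  also have "\<dots> \<in> Fil ((\<Sum>j<m. ds ! j - 1) + m) m"
  proof (rule Sop_vpoly)
    show "vpoly m (\<Sum>j<m. ds ! j - 1) (\<lambda>vs. \<Prod>j<m. poly (Pf j) (of_nat (vs ! j)))"
    proof (rule vpoly_prod)
      fix j assume j: "j < m"
      show "vpoly m (ds ! j - 1) (\<lambda>vs. poly (Pf j) (of_nat (vs ! j)))"
        by (rule vpoly_poly_coord[OF j]) (use Pf j in auto)
    qed
  qed
  also have "(\<Sum>j<m. ds ! j - 1) + m = sum_list ds"
    using sum_minus_one[of m "\<lambda>j. ds ! j"] Pf lens by (simp add: sum_list_sum_nth atLeast0LessThan)
  finally show ?thesis unfolding m_def .
qed

definition bh :: "nat \<Rightarrow> nat \<Rightarrow> nat \<Rightarrow> rat" where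
  "bh t u v = of_nat v ^ (t - 1) / fact (t - 1)"

lemma vp_bh: "1 \<le> t \<Longrightarrow> vp t (bh t)"
  unfolding vp_def bh_def
  by (intro conjI exI[of _ "smult (1 / fact (t - 1)) (monom 1 (t - 1))"])
     (auto simp: poly_monom intro: le_less_trans[OF degree_smult_le] le_less_trans[OF degree_monom_le])

lemma bracket_Zinf: "bracket ts = Zinf (map G (map bh ts))"
  unfolding bracket_Sop Zinf_bridge by (simp add: bh_def)

lemma map_qsh: "qsh pw (map G hs1) (map G hs2) = map (map G) (qsh conv hs1 hs2)"
  by (induction conv hs1 hs2 rule: qsh.induct) (simp_all add: pw_G)

lemma qsh_vp:
  "list_all2 vp ds1 hs1 \<Longrightarrow> list_all2 vp ds2 hs2 \<Longrightarrow> c \<in> set (qsh conv hs1 hs2) \<Longrightarrow>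
   \<exists>ds. list_all2 vp ds c \<and> sum_list ds \<le> sum_list ds1 + sum_list ds2 \<and> length c \<le> length hs1 + length hs2"
proof (induction conv hs1 hs2 arbitrary: ds1 ds2 c rule: qsh.induct)
  case (1 ys)
  then show ?case by (intro exI[of _ ds2]) auto
next
  case (2 v va)
  then show ?case by (intro exI[of _ ds1]) auto
next
  case (3 x xs y ys)
  obtain d1 ds1' where d1: "ds1 = d1 # ds1'" "vp d1 x" "list_all2 vp ds1' xs"
    using 3(4) by (cases ds1) auto
  obtain d2 ds2' where d2: "ds2 = d2 # ds2'" "vp d2 y" "list_all2 vp ds2' ys"
    using 3(5) by (cases ds2) auto
  from 3(6) consider (a) c' where "c = x # c'" "c' \<in> set (qsh conv xs (y # ys))"
    | (b) c' where "c = y # c'" "c' \<in> set (qsh conv (x # xs) ys)"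
    | (c) c' where "c = conv x y # c'" "c' \<in> set (qsh conv xs ys)"
    by auto
  then show ?case
  proof cases
    case a
    obtain ds where "list_all2 vp ds c'" "sum_list ds \<le> sum_list ds1' + sum_list ds2" "length c' \<le> length xs + length (y # ys)"
      using 3(1)[OF d1(3) 3(5) a(2)] by blast
    then show ?thesis using a d1 by (intro exI[of _ "d1 # ds"]) auto
  next
    case b
    obtain ds where "list_all2 vp ds c'" "sum_list ds \<le> sum_list ds1 + sum_list ds2'" "length c' \<le> length (x # xs) + length ys"
      using 3(2)[OF 3(4) d2(3) b(2)] by blast
    then show ?thesis using b d2 by (intro exI[of _ "d2 # ds"]) auto
  next
    case c
    obtain ds where "list_all2 vp ds c'" "sum_list ds \<le> sum_list ds1' + sum_list ds2'" "length c' \<le> length xs + length ys"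
      using 3(3)[OF d1(3) d2(3) c(2)] by blast
    then show ?thesis using c d1 d2 vp_conv[OF d1(2) d2(2)] by (intro exI[of _ "(d1 + d2) # ds"]) auto
  qed
qed

definition FS :: "nat \<Rightarrow> nat \<Rightarrow> nat list set" where
  "FS w l = {ts. ts \<noteq> [] \<and> (\<forall>t\<in>set ts. 1 \<le> t) \<and> length ts \<le> l \<and> sum_list ts \<le> w}"

lemma Fil_FS: "Fil w l = span_one_brackets (FS w l)"
  unfolding Fil_def FS_def ..

lemma list_all2_vp_bh: "(\<forall>t\<in>set ts. 1 \<le> t) \<Longrightarrow> list_all2 vp ts (map bh ts)"
  by (induction ts) (auto intro: vp_bh)

lemma bracket_mult:
  assumes "ts1 \<in> FS w1 l1" "ts2 \<in> FS w2 l2"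
  shows "bracket ts1 * bracket ts2 \<in> Fil (w1 + w2) (l1 + l2)"
proof -
  have v1: "list_all2 vp ts1 (map bh ts1)" and v2: "list_all2 vp ts2 (map bh ts2)"
    using assms unfolding FS_def by (auto intro: list_all2_vp_bh)
  have "bracket ts1 * bracket ts2 = sum_list (map Zinf (qsh pw (map G (map bh ts1)) (map G (map bh ts2))))"
    unfolding bracket_Zinf by (rule Zinf_stuffle) (simp_all add: list_all_iff good_G)
  also have "\<dots> = sum_list (map (\<lambda>c. Zinf (map G c)) (qsh conv (map bh ts1) (map bh ts2)))"
    unfolding map_qsh by (simp add: comp_def)
  also have "\<dots> \<in> Fil (w1 + w2) (l1 + l2)"
    unfolding Fil_def
  proof (rule span_sum_list)
    fix c assume "c \<in> set (qsh conv (map bh ts1) (map bh ts2))"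
    then obtain ds where ds: "list_all2 vp ds c" "sum_list ds \<le> sum_list ts1 + sum_list ts2"
      "length c \<le> length ts1 + length ts2"
      using qsh_vp[OF v1 v2] by auto
    have "Zinf (map G c) \<in> Fil (sum_list ds) (length c)" by (rule Zinf_vp_Fil[OF ds(1)])
    moreover have "sum_list ds \<le> w1 + w2" "length c \<le> l1 + l2" using ds assms unfolding FS_def by auto
    ultimately show "Zinf (map G c) \<in> span_one_brackets {ts. ts \<noteq> [] \<and> (\<forall>t\<in>set ts. 1 \<le> t) \<and> length ts \<le> l1 + l2 \<and> sum_list ts \<le> w1 + w2}"
      using Fil_mono' unfolding Fil_def by blast
  qed
  finally show ?thesis .
qed

lemma Fil_mult:
  assumes f: "f \<in> Fil w1 l1" and g: "g \<in> Fil w2 l2"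
  shows "f * g \<in> Fil (w1 + w2) (l1 + l2)"
proof -
  from f obtain c0 c F where F: "finite F" "F \<subseteq> FS w1 l1"
    "f = fps_const c0 + (\<Sum>ts\<in>F. fps_const (c ts) * bracket ts)"
    unfolding Fil_FS span_one_brackets_def by blast
  from g obtain d0 d H where H: "finite H" "H \<subseteq> FS w2 l2"
    "g = fps_const d0 + (\<Sum>ts\<in>H. fps_const (d ts) * bracket ts)"
    unfolding Fil_FS span_one_brackets_def by blast
  have g': "g \<in> Fil (w1 + w2) (l1 + l2)" using g Fil_mono' by simp
  have bg: "bracket ts * g \<in> Fil (w1 + w2) (l1 + l2)" if ts: "ts \<in> F" for ts
  proof -
    have "bracket ts * g = fps_const d0 * bracket ts + (\<Sum>ts'\<in>H. fps_const (d ts') * (bracket ts * bracket ts'))"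
      unfolding H(3) by (simp add: algebra_simps sum_distrib_left)
    also have "\<dots> \<in> Fil (w1 + w2) (l1 + l2)"
      unfolding Fil_def
    proof (intro span_add span_smult span_sum)
      have "ts \<in> FS (w1 + w2) (l1 + l2)" using ts F(2) unfolding FS_def by auto
      then show "bracket ts \<in> span_one_brackets {ts. ts \<noteq> [] \<and> (\<forall>t\<in>set ts. 1 \<le> t) \<and> length ts \<le> l1 + l2 \<and> sum_list ts \<le> w1 + w2}"
        unfolding FS_def by (rule span_bracket)
      fix ts' assume "ts' \<in> H"
      then show "bracket ts * bracket ts' \<in> span_one_brackets {ts. ts \<noteq> [] \<and> (\<forall>t\<in>set ts. 1 \<le> t) \<and> length ts \<le> l1 + l2 \<and> sum_list ts \<le> w1 + w2}"
        using bracket_mult[of ts w1 l1 ts' w2 l2] ts F(2) H(2) unfolding Fil_def by auto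
    qed
    finally show ?thesis .
  qed
  have "f * g = fps_const c0 * g + (\<Sum>ts\<in>F. fps_const (c ts) * (bracket ts * g))"
    unfolding F(3) by (simp add: distrib_right sum_distrib_right mult.assoc)
  also have "\<dots> \<in> Fil (w1 + w2) (l1 + l2)"
    using g' bg unfolding Fil_def by (intro span_add span_smult span_sum) auto
  finally show ?thesis .
qed

section \<open>Newton-type recursion\<close>

lemma qsh_Nil2: "qsh f xs [] = [xs]"
  by (cases xs) auto

lemma qsh_rep:
  fixes F :: "'a list \<Rightarrow> 'b::comm_monoid_add"
  shows "sum_list (map F (qsh f (replicate i g) [P])) =
     (\<Sum>x\<le>i. F (replicate x g @ P # replicate (i - x) g)) +
     (\<Sum>x<i. F (replicate x g @ f g P # replicate (i - 1 - x) g))"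
proof (induction i arbitrary: F)
  case 0 then show ?case by simp
next
  case (Suc i)
  have A: "sum_list (map F (qsh f (replicate (Suc i) g) [P])) =
     sum_list (map (F \<circ> (#) g) (qsh f (replicate i g) [P])) + F (P # g # replicate i g) + F (f g P # replicate i g)"
    by (simp add: qsh_Nil2 add.assoc)
  have B: "sum_list (map (F \<circ> (#) g) (qsh f (replicate i g) [P])) =
     (\<Sum>x\<le>i. F (replicate (Suc x) g @ P # replicate (i - x) g)) +
     (\<Sum>x<i. F (replicate (Suc x) g @ f g P # replicate (i - 1 - x) g))"
    unfolding Suc.IH by simp
  have C: "(\<Sum>x\<le>Suc i. F (replicate x g @ P # replicate (Suc i - x) g)) =
      F (P # g # replicate i g) + (\<Sum>x\<le>i. F (replicate (Suc x) g @ P # replicate (i - x) g))"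
    by (subst sum.atMost_Suc_shift) simp
  have D0: "Suc i - 1 - Suc x = i - 1 - x" for x by simp
  have D: "(\<Sum>x<Suc i. F (replicate x g @ f g P # replicate (Suc i - 1 - x) g)) =
      F (f g P # replicate i g) + (\<Sum>x<i. F (replicate (Suc x) g @ f g P # replicate (i - 1 - x) g))"
    by (subst sum.lessThan_Suc_shift) (simp only: D0, simp)
  show ?case unfolding A B C D by (simp only: ac_simps)
qed

definition umon :: "nat \<Rightarrow> nat \<Rightarrow> nat \<Rightarrow> rat" where
  "umon a u v = of_nat u ^ a"

definition Ph :: "nat \<Rightarrow> nat \<Rightarrow> nat \<Rightarrow> nat \<Rightarrow> rat" where
  "Ph a k u v = of_nat u ^ a * of_nat ((v - 1) choose (k - 1))"

definition g1 :: "nat \<Rightarrow> rat fps" where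
  "g1 = G (umon 0)"

lemma conv_Ph:
  assumes "1 \<le> k" "0 < u" "0 < v"
  shows "conv (Ph a k) (umon 0) u v = Ph a (Suc k) u v"
proof -
  have bin: "(\<Sum>x\<in>{1..<v}. ((x - 1) choose (k - 1))) = (v - 1) choose k" for v
  proof (induction v)
    case 0 then show ?case using assms by simp
  next
    case (Suc v)
    show ?case
    proof (cases v)
      case 0 then show ?thesis using assms by simp
    next
      case (Suc w)
      have "{1..<Suc v} = insert v {1..<v}" using Suc by auto
      then have "(\<Sum>x\<in>{1..<Suc v}. ((x - 1) choose (k - 1))) = ((v - 1) choose (k - 1)) + ((v - 1) choose k)"
        using Suc.IH by simp
      also have "\<dots> = v choose k" using assms Suc by (cases k) auto
      finally show ?thesis by simp
    qed
  qed
  have "conv (Ph a k) (umon 0) u v = (\<Sum>x\<in>{1..<v}. of_nat u ^ a * of_nat ((x - 1) choose (k - 1)))"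
    unfolding conv_def Ph_def umon_def by simp
  also have "\<dots> = of_nat u ^ a * of_nat (\<Sum>x\<in>{1..<v}. ((x - 1) choose (k - 1)))"
    by (simp add: sum_distrib_left)
  also have "\<dots> = Ph a (Suc k) u v" unfolding bin Ph_def by simp
  finally show ?thesis .
qed

lemma pw_g1_P: "1 \<le> k \<Longrightarrow> pw g1 (G (Ph a k)) = G (Ph a (Suc k))"
proof -
  assume k: "1 \<le> k"
  have "pw g1 (G (Ph a k)) = pw (G (Ph a k)) g1" unfolding pw_def by (simp add: mult.commute)
  also have "\<dots> = G (conv (Ph a k) (umon 0))" unfolding g1_def pw_G ..
  also have "\<dots> = G (Ph a (Suc k))" by (rule G_cong) (use conv_Ph k in auto)
  finally show ?thesis .
qed

definition ee :: "nat \<Rightarrow> rat fps" where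
  "ee i = Zinf (replicate i g1)"

definition pk :: "nat \<Rightarrow> nat \<Rightarrow> rat fps" where
  "pk a k = Zinf [G (Ph a k)]"

definition MM :: "nat \<Rightarrow> nat \<Rightarrow> nat \<Rightarrow> rat fps" where
  "MM a i k = (\<Sum>x\<le>i. Zinf (replicate x g1 @ G (Ph a k) # replicate (i - x) g1))"

lemma good_g1: "good g1" unfolding g1_def by (rule good_G)

lemma e_p:
  assumes "1 \<le> k" "1 \<le> i"
  shows "ee i * pk a k = MM a i k + MM a (i - 1) (Suc k)"
proof -
  have "ee i * pk a k = sum_list (map Zinf (qsh pw (replicate i g1) [G (Ph a k)]))"
    unfolding ee_def pk_def by (rule Zinf_stuffle) (simp_all add: good_g1 good_G list_all_iff)
  also have "\<dots> = MM a i k + (\<Sum>x<i. Zinf (replicate x g1 @ G (Ph a (Suc k)) # replicate (i - 1 - x) g1))"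
    unfolding qsh_rep MM_def pw_g1_P[OF assms(1)] ..
  also have "(\<Sum>x<i. Zinf (replicate x g1 @ G (Ph a (Suc k)) # replicate (i - 1 - x) g1)) = MM a (i - 1) (Suc k)"
    unfolding MM_def using assms(2) by (cases i) (simp_all add: lessThan_Suc_atMost)
  finally show ?thesis .
qed

lemma vp_umon0: "vp 1 (umon 0)"
  unfolding vp_def umon_def by (intro conjI exI[of _ "[:1:]"]) auto

lemma ee_Fil: "ee i \<in> Fil i i"
proof -
  have "list_all2 vp (replicate i 1) (replicate i (umon 0))"
    using vp_umon0 by (simp add: list_all2_conv_all_nth)
  from Zinf_vp_Fil[OF this] show ?thesis unfolding ee_def g1_def by (simp add: map_replicate sum_list_replicate)
qed

lemma Zinf_umon_Fil: "Zinf (map G (map umon es)) \<in> Fil (sum_list es + length es) (length es)"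
proof -
  have "Zinf (map G (map umon es)) = Sop (length es) (\<lambda>us vs. \<Prod>j<length es. of_nat (us ! j) ^ (es ! j))"
    unfolding Zinf_bridge by (simp add: umon_def)
  also have "\<dots> \<in> Fil ((\<Sum>j<length es. es ! j) + length es) (length es)"
    by (rule Sop_umono_Fil)
  finally show ?thesis by (simp add: sum_list_sum_nth atLeast0LessThan)
qed

lemma Ph1: "G (Ph a 1) = G (umon a)"
  by (rule G_cong) (simp add: Ph_def umon_def)

lemma MM_start:
  assumes "1 \<le> j"
  shows "MM a (j - 1) 1 \<in> Fil (a + j) j"
  unfolding MM_def Fil_def
proof (rule span_sum)
  fix x assume x: "x \<in> {..j - 1}"
  define es where "es = replicate x 0 @ a # replicate (j - 1 - x) 0"
  have "replicate x g1 @ G (Ph a 1) # replicate (j - 1 - x) g1 = map G (map umon es)"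
    unfolding es_def g1_def Ph1 by (simp add: map_replicate)
  moreover have "sum_list es = a" "length es = j" unfolding es_def using x assms by auto
  ultimately show "Zinf (replicate x g1 @ G (Ph a 1) # replicate (j - 1 - x) g1) \<in>
      span_one_brackets {ts. ts \<noteq> [] \<and> (\<forall>t\<in>set ts. 1 \<le> t) \<and> length ts \<le> j \<and> sum_list ts \<le> a + j}"
    using Zinf_umon_Fil[of es] unfolding Fil_def by simp
qed

theorem pk_Fil: "1 \<le> j \<Longrightarrow> pk a j \<in> Fil (a + j) j"
proof (induction j rule: less_induct)
  case (less j)
  have inner: "MM a (j - 1 - l) (Suc l) \<in> Fil (a + j) j" if "l < j" for l
    using that
  proof (induction l)
    case 0 then show ?case using MM_start[OF less.prems] by simp
  next
    case (Suc l)
    define i where "i = j - 1 - l"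
    have i1: "1 \<le> i" "i + Suc l = j" using Suc.prems unfolding i_def by auto
    have eq: "ee i * pk a (Suc l) = MM a i (Suc l) + MM a (i - 1) (Suc (Suc l))"
      by (rule e_p) (use i1 in auto)
    have "pk a (Suc l) \<in> Fil (a + Suc l) (Suc l)"
      using less.IH[of "Suc l"] Suc.prems by simp
    then have F1: "ee i * pk a (Suc l) \<in> Fil (i + (a + Suc l)) (i + Suc l)"
      by (rule Fil_mult[OF ee_Fil])
    have e1: "i + (a + Suc l) = a + j" and e2: "i + Suc l = j" using i1 by simp_all
    have A: "ee i * pk a (Suc l) \<in> Fil (a + j) j" using F1 unfolding e1 e2 .
    have B: "MM a i (Suc l) \<in> Fil (a + j) j" using Suc.IH Suc.prems unfolding i_def by simp
    have "MM a (i - 1) (Suc (Suc l)) = ee i * pk a (Suc l) - MM a i (Suc l)" using eq by simp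
    also have "\<dots> \<in> Fil (a + j) j" using A B unfolding Fil_def by (rule span_diff)
    finally have "MM a (i - 1) (Suc (Suc l)) \<in> Fil (a + j) j" .
    moreover have "i - 1 = j - 1 - Suc l" unfolding i_def by simp
    ultimately show ?case by simp
  qed
  have "MM a (j - 1 - (j - 1)) (Suc (j - 1)) \<in> Fil (a + j) j" using inner[of "j - 1"] less.prems by simp
  moreover have "MM a (j - 1 - (j - 1)) (Suc (j - 1)) = pk a j"
    unfolding MM_def pk_def using less.prems by simp
  ultimately show ?case by simp
qed

lemma binom_basis: "\<exists>\<alpha>. \<forall>n. (of_nat n + 1 :: rat) ^ r = (\<Sum>k\<le>r. \<alpha> k * of_nat (n choose k))"
proof (induction r)
  case 0 then show ?case by (intro exI[of _ "\<lambda>_. 1"]) simp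
next
  case (Suc r)
  then obtain \<alpha> where \<alpha>: "\<And>n. (of_nat n + 1 :: rat) ^ r = (\<Sum>k\<le>r. \<alpha> k * of_nat (n choose k))" by blast
  define A where "A k = (if k \<le> r then \<alpha> k * of_nat (Suc k) else (0::rat))" for k
  define B where "B k = (if k = 0 then 0 else \<alpha> (k - 1) * of_nat k :: rat)" for k
  have "(of_nat n + 1 :: rat) ^ Suc r = (\<Sum>k\<le>Suc r. (A k + B k) * of_nat (n choose k))" for n
  proof -
    have m: "(of_nat n + 1 :: rat) * of_nat (n choose k) = of_nat (Suc k) * of_nat (n choose Suc k) + of_nat (Suc k) * of_nat (n choose k)" for k
    proof -
      have "Suc n * (n choose k) = (Suc n choose Suc k) * Suc k" by (rule Suc_times_binomial_eq)
      also have "\<dots> = Suc k * (n choose Suc k) + Suc k * (n choose k)" by (simp add: algebra_simps)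
      finally have "(of_nat (Suc n * (n choose k)) :: rat) = of_nat (Suc k * (n choose Suc k) + Suc k * (n choose k))"
        by (simp only:)
      then show ?thesis by (simp only: of_nat_mult of_nat_add of_nat_Suc add.commute)
    qed
    have "(of_nat n + 1 :: rat) ^ Suc r = (of_nat n + 1) * (\<Sum>k\<le>r. \<alpha> k * of_nat (n choose k))"
      by (simp only: power_Suc \<alpha>)
    also have "\<dots> = (\<Sum>k\<le>r. \<alpha> k * ((of_nat n + 1) * of_nat (n choose k)))"
      by (simp only: sum_distrib_left mult.left_commute)
    also have "\<dots> = (\<Sum>k\<le>r. (\<alpha> k * of_nat (Suc k)) * of_nat (n choose Suc k) + (\<alpha> k * of_nat (Suc k)) * of_nat (n choose k))"
      by (simp only: m distrib_left mult.assoc)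
    also have "\<dots> = (\<Sum>k\<le>r. (\<alpha> k * of_nat (Suc k)) * of_nat (n choose Suc k)) + (\<Sum>k\<le>r. (\<alpha> k * of_nat (Suc k)) * of_nat (n choose k))"
      by (rule sum.distrib)
    also have "(\<Sum>k\<le>r. (\<alpha> k * of_nat (Suc k)) * of_nat (n choose k)) = (\<Sum>k\<le>Suc r. A k * of_nat (n choose k))"
      unfolding A_def by simp
    also have "(\<Sum>k\<le>r. (\<alpha> k * of_nat (Suc k)) * of_nat (n choose Suc k)) = (\<Sum>k\<le>Suc r. B k * of_nat (n choose k))"
      unfolding B_def by (subst sum.atMost_Suc_shift) simp
    also have "(\<Sum>k\<le>Suc r. B k * of_nat (n choose k)) + (\<Sum>k\<le>Suc r. A k * of_nat (n choose k)) =
        (\<Sum>k\<le>Suc r. (A k + B k) * of_nat (n choose k))"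
      by (simp only: sum.distrib[symmetric] distrib_right add.commute)
    finally show ?thesis .
  qed
  then show ?case by (intro exI[of _ "\<lambda>k. A k + B k"] allI)
qed

lemma Zinf_single: "Zinf [g] = Abs_fps (\<lambda>n. \<Sum>u<Suc n. fps_nth (g u) n)"
  unfolding Zinf_def by (simp add: fps_sum_nth)

lemma bibracket_length1: "bibracket [s] [r] = Zinf [G (\<lambda>u v. of_nat u ^ (s - 1) / fact (s - 1) * (of_nat v ^ r / fact r))]"
proof -
  have "bibracket [s] [r] = Sop 1 (\<lambda>us vs. of_nat (us ! 0) ^ r / fact r * (of_nat (vs ! 0) ^ (s - 1) / fact (s - 1)))"
    unfolding bibracket_Sop by simp
  also have "\<dots> = Sop 1 (\<lambda>us vs. of_nat (rev (psums 0 vs) ! 0) ^ r / fact r * (of_nat (rev (diffs us) ! 0) ^ (s - 1) / fact (s - 1)))"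
    by (rule Sop_conj)
  also have "\<dots> = Sop 1 (\<lambda>us vs. \<Prod>j<1. ([\<lambda>u v. of_nat u ^ (s - 1) / fact (s - 1) * (of_nat v ^ r / fact r)] ! j) (us ! j) (vs ! j))"
  proof (rule Sop_cong)
    fix us vs n assume "(us, vs) \<in> bb_index 1 n"
    then obtain u v where "us = [u]" "vs = [v]" unfolding bb_index_def
      by (auto simp: length_Suc_conv)
    then show "of_nat (rev (psums 0 vs) ! 0) ^ r / fact r * (of_nat (rev (diffs us) ! 0) ^ (s - 1) / fact (s - 1)) =
      (\<Prod>j<1. ([\<lambda>u v. of_nat u ^ (s - 1) / fact (s - 1) * (of_nat v ^ r / fact r)] ! j) (us ! j) (vs ! j))"
      by (simp add: mult.commute)
  qed
  also have "\<dots> = Zinf [G (\<lambda>u v. of_nat u ^ (s - 1) / fact (s - 1) * (of_nat v ^ r / fact r))]"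
    using Zinf_bridge[of "[\<lambda>u v. of_nat u ^ (s - 1) / fact (s - 1) * (of_nat v ^ r / fact r)]"] by simp
  finally show ?thesis .
qed

theorem main_Fil: "1 \<le> s \<Longrightarrow> bibracket [s] [r] \<in> Fil (s + r) (r + 1)"
proof -
  assume s: "1 \<le> s"
  obtain \<alpha> where \<alpha>: "\<And>n. (of_nat n + 1 :: rat) ^ r = (\<Sum>k\<le>r. \<alpha> k * of_nat (n choose k))"
    using binom_basis[of r] by blast
  define c where "c k = \<alpha> k / (fact (s - 1) * fact r)" for k
  have hG: "G (\<lambda>u v. of_nat u ^ (s - 1) / fact (s - 1) * (of_nat v ^ r / fact r)) =
        G (\<lambda>u v. \<Sum>k\<le>r. c k * Ph (s - 1) (Suc k) u v)"
  proof (rule G_cong)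
    fix u v :: nat assume uv: "0 < u" "0 < v"
    have vv: "v = Suc (v - 1)" using uv by simp
    have ov: "(of_nat v :: rat) = of_nat (v - 1) + 1" by (subst vv) (simp only: of_nat_Suc add.commute)
    have pw: "(of_nat v :: rat) ^ r = (\<Sum>k\<le>r. \<alpha> k * of_nat ((v - 1) choose k))"
      unfolding ov by (rule \<alpha>)
    define U where "U = (of_nat u ^ (s - 1) :: rat)"
    have "(\<Sum>k\<le>r. c k * Ph (s - 1) (Suc k) u v) = (\<Sum>k\<le>r. (U / (fact (s - 1) * fact r)) * (\<alpha> k * of_nat ((v - 1) choose k)))"
      by (rule sum.cong[OF refl]) (simp add: c_def Ph_def U_def)
    also have "\<dots> = (U / (fact (s - 1) * fact r)) * (of_nat v) ^ r"
      unfolding pw by (rule sum_distrib_left[symmetric])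
    also have "\<dots> = of_nat u ^ (s - 1) / fact (s - 1) * (of_nat v ^ r / fact r)"
      unfolding U_def by simp
    finally show "of_nat u ^ (s - 1) / fact (s - 1) * (of_nat v ^ r / fact r) = (\<Sum>k\<le>r. c k * Ph (s - 1) (Suc k) u v)"
      by simp
  qed
  have "bibracket [s] [r] = Zinf [\<lambda>u. \<Sum>k\<le>r. fps_const (c k) * G (Ph (s - 1) (Suc k)) u]"
  proof -
    have "G (\<lambda>u v. \<Sum>k\<le>r. c k * Ph (s - 1) (Suc k) u v) u = (\<Sum>k\<le>r. fps_const (c k) * G (Ph (s - 1) (Suc k)) u)" for u
    proof -
      have "G (\<lambda>u v. \<Sum>k\<le>r. c k * Ph (s - 1) (Suc k) u v) u = (\<Sum>k\<le>r. G (\<lambda>u v. c k * Ph (s - 1) (Suc k) u v) u)"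
        using G_sum[of "{..r}" "\<lambda>k u v. c k * Ph (s - 1) (Suc k) u v" u] by simp
      also have "\<dots> = (\<Sum>k\<le>r. fps_const (c k) * G (Ph (s - 1) (Suc k)) u)"
        by (rule sum.cong[OF refl], rule G_smult)
      finally show ?thesis .
    qed
    then have "G (\<lambda>u v. \<Sum>k\<le>r. c k * Ph (s - 1) (Suc k) u v) = (\<lambda>u. \<Sum>k\<le>r. fps_const (c k) * G (Ph (s - 1) (Suc k)) u)"
      by (rule ext)
    then show ?thesis unfolding bibracket_length1 hG by simp
  qed
  also have "\<dots> = (\<Sum>k\<le>r. fps_const (c k) * pk (s - 1) (Suc k))"
    unfolding pk_def Zinf_single
  proof (rule fps_ext)
    fix n
    have "(\<Sum>u<Suc n. fps_nth (\<Sum>k\<le>r. fps_const (c k) * G (Ph (s - 1) (Suc k)) u) n) =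
        (\<Sum>u<Suc n. \<Sum>k\<le>r. c k * fps_nth (G (Ph (s - 1) (Suc k)) u) n)"
      by (simp add: fps_sum_nth)
    also have "\<dots> = (\<Sum>k\<le>r. \<Sum>u<Suc n. c k * fps_nth (G (Ph (s - 1) (Suc k)) u) n)"
      by (rule sum.swap)
    also have "\<dots> = (\<Sum>k\<le>r. c k * (\<Sum>u<Suc n. fps_nth (G (Ph (s - 1) (Suc k)) u) n))"
      by (rule sum.cong[OF refl], rule sum_distrib_left[symmetric])
    finally show "fps_nth (Abs_fps (\<lambda>n. \<Sum>u<Suc n. fps_nth (\<Sum>k\<le>r. fps_const (c k) * G (Ph (s - 1) (Suc k)) u) n)) n =
        fps_nth (\<Sum>k\<le>r. fps_const (c k) * Abs_fps (\<lambda>n. \<Sum>u<Suc n. fps_nth (G (Ph (s - 1) (Suc k)) u) n)) n"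
      by (simp add: fps_sum_nth)
  qed
  also have "\<dots> \<in> Fil (s + r) (r + 1)"
    unfolding Fil_def
  proof (intro span_sum span_smult)
    fix k assume "k \<in> {..r}"
    have "pk (s - 1) (Suc k) \<in> Fil (s - 1 + Suc k) (Suc k)" by (rule pk_Fil) simp
    moreover have "s - 1 + Suc k \<le> s + r" "Suc k \<le> r + 1" using s \<open>k \<in> {..r}\<close> by auto
    ultimately show "pk (s - 1) (Suc k) \<in> span_one_brackets {ts. ts \<noteq> [] \<and> (\<forall>t\<in>set ts. 1 \<le> t) \<and> length ts \<le> r + 1 \<and> sum_list ts \<le> s + r}"
      using Fil_mono' unfolding Fil_def by blast
  qed
  finally show ?thesis .
qed

theorem proposition4p4:
  shows "(\<forall>s r :: nat. 1 \<le> s \<longrightarrow> bibracket [s] [r] \<in> MD) \<and>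
         (\<forall>k d s r :: nat. 1 \<le> k \<longrightarrow> 1 \<le> d \<longrightarrow> 1 \<le> s \<longrightarrow> s \<le> k \<longrightarrow> r \<le> d \<longrightarrow>
            bibracket [s] [r] \<in> Fil_WL (k + d) (d + 1)
          \<and> bibracket [s] [r] \<in> span_one_brackets
              {ts. ts \<noteq> [] \<and> (\<forall>t\<in>set ts. 1 \<le> t) \<and> length ts \<le> d + 1 \<and>
                   length ts \<le> k + d \<and> sum_list ts \<le> k + d})"
proof (intro conjI allI impI)
  fix s r :: nat assume s: "1 \<le> s"
  have "Fil (s + r) (r + 1) \<subseteq> MD"
    unfolding Fil_def MD_def by (rule span_mono) auto
  then show "bibracket [s] [r] \<in> MD" using main_Fil[OF s] by blast
next
  fix k d s r :: nat assume k: "1 \<le> k" and d: "1 \<le> d" and s: "1 \<le> s" and sk: "s \<le> k" and rd: "r \<le> d"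
  have F: "bibracket [s] [r] \<in> Fil (k + d) (d + 1)"
    using main_Fil[OF s] Fil_mono'[of _ "s + r" "r + 1" "k + d" "d + 1"] sk rd by simp
  then show "bibracket [s] [r] \<in> Fil_WL (k + d) (d + 1)"
    unfolding Fil_def Fil_WL_def .
  have "{ts. ts \<noteq> [] \<and> (\<forall>t\<in>set ts. 1 \<le> t) \<and> length ts \<le> d + 1 \<and> sum_list ts \<le> k + d} =
        {ts. ts \<noteq> [] \<and> (\<forall>t\<in>set ts. 1 \<le> t) \<and> length ts \<le> d + 1 \<and> length ts \<le> k + d \<and> sum_list ts \<le> k + d}"
    using k by auto
  then show "bibracket [s] [r] \<in> span_one_brackets
              {ts. ts \<noteq> [] \<and> (\<forall>t\<in>set ts. 1 \<le> t) \<and> length ts \<le> d + 1 \<and>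
                   length ts \<le> k + d \<and> sum_list ts \<le> k + d}"
    using F unfolding Fil_def by simp
qed

end
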